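(* Suppose that $\mathcal A\subseteq\mathcal{Q}(\ell_2)$ is a masa of $\mathcal{Q}(\ell_2)$ which has a commutative lift. Then $\mathcal A=\pi[\mathcal B']$ for some masa $\mathcal B'$ of $\mathcal B(\ell_2)$.
   Context: $\pi:\mathcal B(\ell_2)\to\mathcal{Q}(\ell_2)=\mathcal B(\ell_2)/\mathcal K(\ell_2)$ is the Calkin quotient map. A masa is a maximal commutative C*-subalgebra. $\mathcal A\subseteq\mathcal{Q}(\ell_2)$ has a commutative lift if $\pi[\mathcal B]=\mathcal A$ for some commutative C*-subalgebra $\mathcal B\subseteq\mathcal B(\ell_2)$. *)

theory Defs
  imports Complex_Main
begin

definition l2 :: "(nat \<Rightarrow> complex) set" where
  "l2 = {x. summable (\<lambda>n. (cmod (x n))^2)}"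

definition vnorm :: "(nat \<Rightarrow> complex) \<Rightarrow> real" where
  "vnorm x = sqrt (\<Sum>n. (cmod (x n))^2)"

definition inner2 :: "(nat \<Rightarrow> complex) \<Rightarrow> (nat \<Rightarrow> complex) \<Rightarrow> complex" where
  "inner2 x y = (\<Sum>n. x n * cnj (y n))"

definition vdiff :: "(nat \<Rightarrow> complex) \<Rightarrow> (nat \<Rightarrow> complex) \<Rightarrow> (nat \<Rightarrow> complex)" where
  "vdiff x y = (\<lambda>n. x n - y n)"

type_synonym l2op = "(nat \<Rightarrow> complex) \<Rightarrow> (nat \<Rightarrow> complex)"

text \<open>A bounded linear operator on ell_2, represented canonically as a function that
  is zero outside ell_2 (so equality of operators is extensional equality).\<close>
definition bounded_op :: "l2op \<Rightarrow> bool" where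
  "bounded_op T \<longleftrightarrow>
     (\<forall>x\<in>l2. T x \<in> l2) \<and>
     (\<forall>x\<in>l2. \<forall>y\<in>l2. \<forall>c. T (\<lambda>n. c * x n + y n) = (\<lambda>n. c * T x n + T y n)) \<and>
     (\<exists>K. \<forall>x\<in>l2. vnorm (T x) \<le> K * vnorm x) \<and>
     (\<forall>x. x \<notin> l2 \<longrightarrow> T x = (\<lambda>_. 0))"

definition BL :: "l2op set" where
  "BL = {T. bounded_op T}"

definition op_zero :: l2op where "op_zero = (\<lambda>x n. 0)"
definition op_add :: "l2op \<Rightarrow> l2op \<Rightarrow> l2op" where "op_add T S = (\<lambda>x n. T x n + S x n)"
definition op_scale :: "complex \<Rightarrow> l2op \<Rightarrow> l2op" where "op_scale c T = (\<lambda>x n. c * T x n)"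
definition op_mul :: "l2op \<Rightarrow> l2op \<Rightarrow> l2op" where "op_mul T S = T \<circ> S"

definition op_adj :: "l2op \<Rightarrow> l2op" where
  "op_adj T = (THE S. S \<in> BL \<and> (\<forall>x\<in>l2. \<forall>y\<in>l2. inner2 (T x) y = inner2 x (S y)))"

definition op_norm :: "l2op \<Rightarrow> real" where
  "op_norm T = Sup {vnorm (T x) | x. x \<in> l2 \<and> vnorm x \<le> 1}"

text \<open>Compact operators: the image of the unit ball is relatively compact, i.e. every
  sequence in the unit ball has a subsequence whose image is Cauchy.\<close>
definition compact_l2op :: "l2op \<Rightarrow> bool" where
  "compact_l2op T \<longleftrightarrow> T \<in> BL \<and>
     (\<forall>xs::nat \<Rightarrow> nat \<Rightarrow> complex. (\<forall>k. xs k \<in> l2 \<and> vnorm (xs k) \<le> 1) \<longrightarrow>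
        (\<exists>r::nat \<Rightarrow> nat. strict_mono r \<and>
           (\<forall>e>0. \<exists>N::nat. \<forall>m\<ge>N. \<forall>n\<ge>N. vnorm (vdiff (T (xs (r m))) (T (xs (r n)))) < e)))"

text \<open>Elements of the Calkin algebra are cosets T + K(ell_2); calkin is the quotient map pi.\<close>
definition calkin :: "l2op \<Rightarrow> l2op set" where
  "calkin T = {S \<in> BL. compact_l2op (op_add S (op_scale (-1) T))}"

definition QC :: "l2op set set" where
  "QC = calkin ` BL"

definition rep :: "l2op set \<Rightarrow> l2op" where "rep a = (SOME T. T \<in> a)"

definition q_zero :: "l2op set" where "q_zero = calkin op_zero"
definition q_add :: "l2op set \<Rightarrow> l2op set \<Rightarrow> l2op set" where
  "q_add a b = calkin (op_add (rep a) (rep b))"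
definition q_scale :: "complex \<Rightarrow> l2op set \<Rightarrow> l2op set" where
  "q_scale c a = calkin (op_scale c (rep a))"
definition q_mul :: "l2op set \<Rightarrow> l2op set \<Rightarrow> l2op set" where
  "q_mul a b = calkin (op_mul (rep a) (rep b))"
definition q_adj :: "l2op set \<Rightarrow> l2op set" where
  "q_adj a = calkin (op_adj (rep a))"
definition q_norm :: "l2op set \<Rightarrow> real" where
  "q_norm a = Inf (op_norm ` a)"

definition cstar_subalg ::
  "'a set \<Rightarrow> 'a \<Rightarrow> ('a \<Rightarrow> 'a \<Rightarrow> 'a) \<Rightarrow> (complex \<Rightarrow> 'a \<Rightarrow> 'a) \<Rightarrow> ('a \<Rightarrow> 'a \<Rightarrow> 'a)
     \<Rightarrow> ('a \<Rightarrow> 'a) \<Rightarrow> ('a \<Rightarrow> real) \<Rightarrow> 'a set \<Rightarrow> bool" where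
  "cstar_subalg U z add sc mul adj nrm A \<longleftrightarrow>
     A \<subseteq> U \<and> z \<in> A \<and>
     (\<forall>a\<in>A. \<forall>b\<in>A. add a b \<in> A \<and> mul a b \<in> A) \<and>
     (\<forall>c. \<forall>a\<in>A. sc c a \<in> A) \<and>
     (\<forall>a\<in>A. adj a \<in> A) \<and>
     (\<forall>X a. (\<forall>k. X k \<in> A) \<and> a \<in> U \<and> (\<lambda>k. nrm (add (X k) (sc (-1) a))) \<longlonglongrightarrow> 0
            \<longrightarrow> a \<in> A)"

definition comm_cstar_subalg where
  "comm_cstar_subalg U z add sc mul adj nrm A \<longleftrightarrow>
     cstar_subalg U z add sc mul adj nrm A \<and> (\<forall>a\<in>A. \<forall>b\<in>A. mul a b = mul b a)"

definition masa where
  "masa U z add sc mul adj nrm A \<longleftrightarrow>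
     comm_cstar_subalg U z add sc mul adj nrm A \<and>
     (\<forall>C. comm_cstar_subalg U z add sc mul adj nrm C \<and> A \<subseteq> C \<longrightarrow> C = A)"

abbreviation comm_subalg_B :: "l2op set \<Rightarrow> bool" where
  "comm_subalg_B \<equiv> comm_cstar_subalg BL op_zero op_add op_scale op_mul op_adj op_norm"
abbreviation masa_B :: "l2op set \<Rightarrow> bool" where
  "masa_B \<equiv> masa BL op_zero op_add op_scale op_mul op_adj op_norm"
abbreviation masa_Q :: "l2op set set \<Rightarrow> bool" where
  "masa_Q \<equiv> masa QC q_zero q_add q_scale q_mul q_adj q_norm"

definition has_commutative_lift :: "l2op set set \<Rightarrow> bool" where
  "has_commutative_lift A \<longleftrightarrow> (\<exists>B. comm_subalg_B B \<and> calkin ` B = A)"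

end

theory Submission
  imports Defs "HOL-Analysis.Analysis"
begin
lemma sq_sum_le: "(a + b)^2 \<le> 2 * (a::real)^2 + 2 * b^2"
proof -
  have "0 \<le> (a - b)^2" by simp
  then show ?thesis unfolding power2_eq_square by (simp add: algebra_simps)
qed

lemma prod_le_sq: "(a::real) * b \<le> a^2 + b^2"
proof -
  have "0 \<le> (a - b)^2" by simp
  then have h1: "2*(a*b) \<le> a*a + b*b" unfolding power2_eq_square by (simp add: algebra_simps)
  have h2: "0 \<le> a*a + b*b" by simp
  show ?thesis using h1 h2 unfolding power2_eq_square by linarith
qed

lemma l2_lin[simp,intro]: assumes "x \<in> l2" "y \<in> l2" shows "(\<lambda>n. c * x n + y n) \<in> l2"
proof -
  have sx: "summable (\<lambda>n. (cmod (x n))^2)" and sy: "summable (\<lambda>n. (cmod (y n))^2)"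
    using assms by (auto simp: l2_def)
  have S: "summable (\<lambda>n. 2 * (cmod c)^2 * (cmod (x n))^2 + 2 * (cmod (y n))^2)"
    using sx sy by (intro summable_add summable_mult) auto
  have B: "norm ((cmod (c * x n + y n))^2) \<le> 2 * (cmod c)^2 * (cmod (x n))^2 + 2 * (cmod (y n))^2" for n
  proof -
    have "cmod (c * x n + y n) \<le> cmod c * cmod (x n) + cmod (y n)"
      by (metis norm_mult norm_triangle_ineq)
    then have "(cmod (c * x n + y n))^2 \<le> (cmod c * cmod (x n) + cmod (y n))^2"
      by (simp add: power_mono)
    also have "\<dots> \<le> 2 * (cmod c * cmod (x n))^2 + 2 * (cmod (y n))^2" by (rule sq_sum_le)
    finally show ?thesis by (simp add: power_mult_distrib)
  qed
  have "summable (\<lambda>n. (cmod (c * x n + y n))^2)"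
    by (rule summable_comparison_test'[OF S, of 0]) (rule B)
  then show ?thesis unfolding l2_def by simp
qed

lemma l2_zero[simp,intro]: "(\<lambda>n. 0) \<in> l2"
  by (simp add: l2_def)

lemma l2_add[simp,intro]: "x \<in> l2 \<Longrightarrow> y \<in> l2 \<Longrightarrow> (\<lambda>n. x n + y n) \<in> l2"
  using l2_lin[of x y 1] by simp

lemma l2_scale[simp,intro]: "x \<in> l2 \<Longrightarrow> (\<lambda>n. c * x n) \<in> l2"
  using l2_lin[of x "\<lambda>n. 0" c] by simp

lemma l2_diff[simp,intro]: "x \<in> l2 \<Longrightarrow> y \<in> l2 \<Longrightarrow> (\<lambda>n. x n - y n) \<in> l2"
  using l2_lin[of y x "-1"] by simp

lemma l2_vdiff[simp,intro]: "x \<in> l2 \<Longrightarrow> y \<in> l2 \<Longrightarrow> vdiff x y \<in> l2"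
  by (simp add: vdiff_def)

lemma l2_summable: "x \<in> l2 \<Longrightarrow> summable (\<lambda>n. (cmod (x n))^2)"
  by (simp add: l2_def)

lemma vnorm_nonneg[simp]: assumes "x \<in> l2" shows "0 \<le> vnorm x"
proof -
  have "0 \<le> (\<Sum>n. (cmod (x n))^2)" using assms by (intro suminf_nonneg) (auto simp: l2_def)
  then show ?thesis by (simp add: vnorm_def)
qed

lemma vnorm_sq: assumes "x \<in> l2" shows "(vnorm x)^2 = (\<Sum>n. (cmod (x n))^2)"
proof -
  have "0 \<le> (\<Sum>n. (cmod (x n))^2)" using assms by (intro suminf_nonneg) (auto simp: l2_def)
  then show ?thesis by (simp add: vnorm_def)
qed

lemma vnorm_zero_iff: assumes "x \<in> l2" shows "vnorm x = 0 \<longleftrightarrow> x = (\<lambda>n. 0)"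
proof
  assume "vnorm x = 0"
  then have "(\<Sum>n. (cmod (x n))^2) = 0" using vnorm_sq[OF assms] by simp
  then have "\<forall>n. (cmod (x n))^2 = 0"
    using suminf_eq_zero_iff[OF l2_summable[OF assms] zero_le_power2] by blast
  then show "x = (\<lambda>n. 0)" by auto
qed (simp add: vnorm_def)

lemma vnorm_zero[simp]: "vnorm (\<lambda>n. 0) = 0"
  by (simp add: vnorm_def)

lemma vnorm_scale: assumes "x \<in> l2" shows "vnorm (\<lambda>n. c * x n) = cmod c * vnorm x"
proof -
  have "(\<Sum>n. (cmod (c * x n))^2) = (\<Sum>n. (cmod c)^2 * (cmod (x n))^2)"
    by (simp only: norm_mult power_mult_distrib)
  also have "\<dots> = (cmod c)^2 * (\<Sum>n. (cmod (x n))^2)"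
    by (rule suminf_mult) (rule l2_summable[OF assms])
  finally have e: "(\<Sum>n. (cmod (c * x n))^2) = (cmod c)^2 * (\<Sum>n. (cmod (x n))^2)" .
  have "vnorm (\<lambda>n. c * x n) = sqrt ((cmod c)^2) * sqrt (\<Sum>n. (cmod (x n))^2)"
    unfolding vnorm_def e by (rule real_sqrt_mult)
  then show ?thesis unfolding vnorm_def by simp
qed

lemma partial_CS:
  "(\<Sum>n<N. cmod (x n) * cmod (y n)) \<le> sqrt (\<Sum>n<N. (cmod (x n))^2) * sqrt (\<Sum>n<N. (cmod (y n))^2)"
proof -
  have "(\<Sum>n<N. cmod (x n) * cmod (y n))^2 \<le> (\<Sum>n<N. (cmod (x n))^2) * (\<Sum>n<N. (cmod (y n))^2)"
    using Cauchy_Schwarz_ineq_sum[of "\<lambda>n. cmod (x n)" "\<lambda>n. cmod (y n)" "{..<N}"] by simp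
  then have "(\<Sum>n<N. cmod (x n) * cmod (y n)) \<le> sqrt ((\<Sum>n<N. (cmod (x n))^2) * (\<Sum>n<N. (cmod (y n))^2))"
    by (rule real_le_rsqrt)
  then show ?thesis
    using real_sqrt_mult[of "\<Sum>n<N. (cmod (x n))^2" "\<Sum>n<N. (cmod (y n))^2"] by linarith
qed

lemma partial_le_vnorm: assumes "x \<in> l2" shows "sqrt (\<Sum>n<N. (cmod (x n))^2) \<le> vnorm x"
proof -
  have "(\<Sum>n<N. (cmod (x n))^2) \<le> (\<Sum>n. (cmod (x n))^2)"
    using assms by (intro sum_le_suminf) (auto simp: l2_def)
  then show ?thesis unfolding vnorm_def by (rule real_sqrt_le_mono)
qed

lemma prod_summable: assumes "x \<in> l2" "y \<in> l2" shows "summable (\<lambda>n. cmod (x n) * cmod (y n))"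
proof -
  have "summable (\<lambda>n. (cmod (x n))^2 + (cmod (y n))^2)"
    using assms by (intro summable_add) (auto simp: l2_def)
  moreover have "norm (cmod (x n) * cmod (y n)) \<le> (cmod (x n))^2 + (cmod (y n))^2" for n
    using prod_le_sq[of "cmod (x n)" "cmod (y n)"] by simp
  ultimately show ?thesis by (rule summable_comparison_test'[of _ 0])
qed

lemma CS_real: assumes "x \<in> l2" "y \<in> l2"
  shows "(\<Sum>n. cmod (x n) * cmod (y n)) \<le> vnorm x * vnorm y"
proof (rule suminf_le_const[OF prod_summable[OF assms]])
  fix N
  have "(\<Sum>n<N. cmod (x n) * cmod (y n)) \<le> sqrt (\<Sum>n<N. (cmod (x n))^2) * sqrt (\<Sum>n<N. (cmod (y n))^2)"
    by (rule partial_CS)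
  also have "\<dots> \<le> vnorm x * vnorm y"
    using assms by (intro mult_mono partial_le_vnorm assms) (auto intro!: sum_nonneg)
  finally show "(\<Sum>n<N. cmod (x n) * cmod (y n)) \<le> vnorm x * vnorm y" .
qed

lemma inner_summable_norm: assumes "x \<in> l2" "y \<in> l2" shows "summable (\<lambda>n. norm (x n * cnj (y n)))"
  using prod_summable[OF assms] by (simp add: norm_mult)

lemma inner_summable: assumes "x \<in> l2" "y \<in> l2" shows "summable (\<lambda>n. x n * cnj (y n))"
  using inner_summable_norm[OF assms] by (rule summable_norm_cancel)

lemma inner_CS: assumes "x \<in> l2" "y \<in> l2" shows "cmod (inner2 x y) \<le> vnorm x * vnorm y"
proof -
  have "cmod (inner2 x y) \<le> (\<Sum>n. norm (x n * cnj (y n)))"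
    unfolding inner2_def by (rule summable_norm[OF inner_summable_norm[OF assms]])
  also have "\<dots> = (\<Sum>n. cmod (x n) * cmod (y n))" by (simp add: norm_mult)
  also have "\<dots> \<le> vnorm x * vnorm y" by (rule CS_real[OF assms])
  finally show ?thesis .
qed

lemma vnorm_triangle: assumes "x \<in> l2" "y \<in> l2"
  shows "vnorm (\<lambda>n. x n + y n) \<le> vnorm x + vnorm y"
proof -
  have s1: "summable (\<lambda>n. (cmod (x n))^2)" "summable (\<lambda>n. (cmod (y n))^2)"
    using assms by (auto simp: l2_def)
  have s2: "summable (\<lambda>n. cmod (x n) * cmod (y n))" by (rule prod_summable[OF assms])
  have "(vnorm (\<lambda>n. x n + y n))^2 = (\<Sum>n. (cmod (x n + y n))^2)"
    using vnorm_sq[of "\<lambda>n. x n + y n"] assms by simp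
  also have "\<dots> \<le> (\<Sum>n. (cmod (x n))^2 + 2 * (cmod (x n) * cmod (y n)) + (cmod (y n))^2)"
  proof (rule suminf_le)
    show "summable (\<lambda>n. (cmod (x n + y n))^2)" using assms l2_add by (simp add: l2_def)
    show "summable (\<lambda>n. (cmod (x n))^2 + 2 * (cmod (x n) * cmod (y n)) + (cmod (y n))^2)"
      using s1 s2 by (intro summable_add summable_mult) auto
    fix n
    have "cmod (x n + y n) \<le> cmod (x n) + cmod (y n)" by (rule norm_triangle_ineq)
    then have "(cmod (x n + y n))^2 \<le> (cmod (x n) + cmod (y n))^2" by (simp add: power_mono)
    then show "(cmod (x n + y n))^2 \<le> (cmod (x n))^2 + 2 * (cmod (x n) * cmod (y n)) + (cmod (y n))^2"
      by (simp add: power2_sum)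
  qed
  also have "\<dots> = (\<Sum>n. (cmod (x n))^2) + 2 * (\<Sum>n. cmod (x n) * cmod (y n)) + (\<Sum>n. (cmod (y n))^2)"
  proof -
    have a: "summable (\<lambda>n. 2 * (cmod (x n) * cmod (y n)))" using s2 by (rule summable_mult)
    have b: "summable (\<lambda>n. (cmod (x n))^2 + 2 * (cmod (x n) * cmod (y n)))"
      using s1(1) a by (rule summable_add)
    have "(\<Sum>n. (cmod (x n))^2 + 2 * (cmod (x n) * cmod (y n)) + (cmod (y n))^2)
       = (\<Sum>n. (cmod (x n))^2 + 2 * (cmod (x n) * cmod (y n))) + (\<Sum>n. (cmod (y n))^2)"
      using b s1(2) by (rule suminf_add[symmetric])
    also have "(\<Sum>n. (cmod (x n))^2 + 2 * (cmod (x n) * cmod (y n))) = (\<Sum>n. (cmod (x n))^2) + (\<Sum>n. 2 * (cmod (x n) * cmod (y n)))"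
      using s1(1) a by (rule suminf_add[symmetric])
    also have "(\<Sum>n. 2 * (cmod (x n) * cmod (y n))) = 2 * (\<Sum>n. cmod (x n) * cmod (y n))"
      using s2 by (rule suminf_mult)
    finally show ?thesis .
  qed
  also have "\<dots> \<le> (vnorm x)^2 + 2 * (vnorm x * vnorm y) + (vnorm y)^2"
    using CS_real[OF assms] vnorm_sq[OF assms(1)] vnorm_sq[OF assms(2)] by simp
  also have "\<dots> = (vnorm x + vnorm y)^2" by (simp add: power2_sum)
  finally have "(vnorm (\<lambda>n. x n + y n))^2 \<le> (vnorm x + vnorm y)^2" .
  then show ?thesis by (rule power2_le_imp_le) (simp add: add_nonneg_nonneg assms)
qed

lemma inner_self: assumes "x \<in> l2" shows "inner2 x x = complex_of_real ((vnorm x)^2)"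
proof -
  have e: "x n * cnj (x n) = complex_of_real ((cmod (x n))^2)" for n
    by (simp only: complex_norm_square)
  have "inner2 x x = (\<Sum>n. complex_of_real ((cmod (x n))^2))"
    unfolding inner2_def by (simp only: e)
  also have "\<dots> = complex_of_real (\<Sum>n. (cmod (x n))^2)"
    using assms by (simp add: l2_def suminf_of_real)
  finally show ?thesis using vnorm_sq[OF assms] by simp
qed

lemma inner_lin: assumes "x \<in> l2" "y \<in> l2" "z \<in> l2"
  shows "inner2 (\<lambda>n. c * x n + y n) z = c * inner2 x z + inner2 y z"
proof -
  have "inner2 (\<lambda>n. c * x n + y n) z = (\<Sum>n. c * (x n * cnj (z n)) + y n * cnj (z n))"
    unfolding inner2_def by (simp add: algebra_simps)
  also have "\<dots> = (\<Sum>n. c * (x n * cnj (z n))) + (\<Sum>n. y n * cnj (z n))"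
    using inner_summable[OF assms(1,3)] inner_summable[OF assms(2,3)]
    by (intro suminf_add[symmetric] summable_mult) auto
  also have "\<dots> = c * inner2 x z + inner2 y z"
    unfolding inner2_def using inner_summable[OF assms(1,3)] by (simp add: suminf_mult)
  finally show ?thesis .
qed

lemma inner_cnj: assumes "x \<in> l2" "y \<in> l2" shows "inner2 y x = cnj (inner2 x y)"
proof -
  have "(\<lambda>n. x n * cnj (y n)) sums inner2 x y"
    unfolding inner2_def using inner_summable[OF assms] by (simp add: summable_sums)
  then have "(\<lambda>n. cnj (x n * cnj (y n))) sums cnj (inner2 x y)" by (simp only: sums_cnj)
  then have "(\<lambda>n. y n * cnj (x n)) sums cnj (inner2 x y)" by (simp add: mult.commute)
  then show ?thesis unfolding inner2_def by (simp add: sums_iff)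
qed

lemma inner_lin2: assumes "x \<in> l2" "y \<in> l2" "z \<in> l2"
  shows "inner2 z (\<lambda>n. c * x n + y n) = cnj c * inner2 z x + inner2 z y"
proof -
  have "inner2 z (\<lambda>n. c * x n + y n) = cnj (inner2 (\<lambda>n. c * x n + y n) z)"
    using assms by (intro inner_cnj) auto
  also have "\<dots> = cnj (c * inner2 x z + inner2 y z)" using inner_lin[OF assms, of c] by simp
  also have "\<dots> = cnj c * cnj (inner2 x z) + cnj (inner2 y z)" by simp
  also have "\<dots> = cnj c * inner2 z x + inner2 z y"
    using inner_cnj[OF assms(3,1)] inner_cnj[OF assms(3,2)] by simp
  finally show ?thesis .
qed

lemma inner2_zero_left[simp]: "inner2 (\<lambda>n. 0) y = 0"
  by (simp add: inner2_def)
lemma inner2_zero_right[simp]: "inner2 y (\<lambda>n. 0) = 0"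
  by (simp add: inner2_def)

lemma l2_uminus[simp,intro]: "x \<in> l2 \<Longrightarrow> (\<lambda>n. - x n) \<in> l2"
  using l2_scale[of x "-1"] by simp

lemma op_add_apply[simp]: "op_add T S x = (\<lambda>n. T x n + S x n)" by (simp add: op_add_def)
lemma op_scale_apply[simp]: "op_scale c T x = (\<lambda>n. c * T x n)" by (simp add: op_scale_def)
lemma op_mul_apply[simp]: "op_mul T S x = T (S x)" by (simp add: op_mul_def)
lemma op_zero_apply[simp]: "op_zero x = (\<lambda>n. 0)" by (simp add: op_zero_def)

lemma BL_l2[simp,intro]: "T \<in> BL \<Longrightarrow> x \<in> l2 \<Longrightarrow> T x \<in> l2"
  unfolding BL_def bounded_op_def by blast
lemma BL_out: "T \<in> BL \<Longrightarrow> x \<notin> l2 \<Longrightarrow> T x = (\<lambda>_. 0)"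
  unfolding BL_def bounded_op_def by blast
lemma BL_lin: "T \<in> BL \<Longrightarrow> x \<in> l2 \<Longrightarrow> y \<in> l2 \<Longrightarrow> T (\<lambda>n. c * x n + y n) = (\<lambda>n. c * T x n + T y n)"
  unfolding BL_def bounded_op_def by blast
lemma BL_bound: assumes "T \<in> BL" obtains K where "K \<ge> 0" "\<And>x. x \<in> l2 \<Longrightarrow> vnorm (T x) \<le> K * vnorm x"
proof -
  obtain K where K: "\<And>x. x \<in> l2 \<Longrightarrow> vnorm (T x) \<le> K * vnorm x"
    using assms unfolding BL_def bounded_op_def by blast
  have "vnorm (T x) \<le> max K 0 * vnorm x" if "x \<in> l2" for x
  proof -
    have "K * vnorm x \<le> max K 0 * vnorm x" using that by (intro mult_right_mono) auto
    then show ?thesis using K[OF that] by linarith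
  qed
  then show ?thesis using that[of "max K 0"] by auto
qed

lemma BL_zero[simp]: assumes "T \<in> BL" shows "T (\<lambda>n. 0) = (\<lambda>n. 0)"
proof -
  have "T (\<lambda>n. (-1) * 0 + 0) = (\<lambda>n. (-1) * T (\<lambda>n. 0) n + T (\<lambda>n. 0) n)"
    using BL_lin[OF assms, of "\<lambda>n. 0" "\<lambda>n. 0" "-1"] by simp
  then show ?thesis by simp
qed

lemma BL_add: "T \<in> BL \<Longrightarrow> x \<in> l2 \<Longrightarrow> y \<in> l2 \<Longrightarrow> T (\<lambda>n. x n + y n) = (\<lambda>n. T x n + T y n)"
  using BL_lin[of T x y 1] by simp
lemma BL_scale: "T \<in> BL \<Longrightarrow> x \<in> l2 \<Longrightarrow> T (\<lambda>n. c * x n) = (\<lambda>n. c * T x n)"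
  using BL_lin[of T x "\<lambda>n. 0" c] by simp
lemma BL_diff: "T \<in> BL \<Longrightarrow> x \<in> l2 \<Longrightarrow> y \<in> l2 \<Longrightarrow> T (\<lambda>n. x n - y n) = (\<lambda>n. T x n - T y n)"
  using BL_lin[of T y x "-1"] by simp

lemma vnorm_le0: "x \<in> l2 \<Longrightarrow> vnorm x \<le> 0 \<Longrightarrow> x = (\<lambda>n. 0)"
  using vnorm_nonneg vnorm_zero_iff by (metis order_antisym)

lemma vnorm_diff_triangle: "x \<in> l2 \<Longrightarrow> y \<in> l2 \<Longrightarrow> vnorm (\<lambda>n. x n - y n) \<le> vnorm x + vnorm y"
proof -
  assume a: "x \<in> l2" "y \<in> l2"
  have "vnorm (\<lambda>n. x n + (-1) * y n) \<le> vnorm x + vnorm (\<lambda>n. (-1) * y n)"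
    using a by (intro vnorm_triangle) auto
  also have "vnorm (\<lambda>n. (-1) * y n) = vnorm y" using vnorm_scale[OF a(2), of "-1"] by simp
  finally show ?thesis by simp
qed

subsection \<open>Operator norm\<close>

lemma onorm_bdd: assumes "T \<in> BL" shows "bdd_above {vnorm (T x) | x. x \<in> l2 \<and> vnorm x \<le> 1}"
proof -
  obtain K where K: "K \<ge> 0" "\<And>x. x \<in> l2 \<Longrightarrow> vnorm (T x) \<le> K * vnorm x" using BL_bound[OF assms] by blast
  have "vnorm (T x) \<le> K" if "x \<in> l2" "vnorm x \<le> 1" for x
  proof -
    have "K * vnorm x \<le> K * 1" using that K by (intro mult_left_mono) auto
    then show ?thesis using K(2)[OF that(1)] by simp
  qed
  then show ?thesis unfolding bdd_above_def by blast
qed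

lemma op_norm_ge: assumes "T \<in> BL" "x \<in> l2" "vnorm x \<le> 1" shows "vnorm (T x) \<le> op_norm T"
  unfolding op_norm_def using assms by (intro cSup_upper onorm_bdd) auto

lemma op_norm_nonneg[simp]: assumes "T \<in> BL" shows "0 \<le> op_norm T"
  using op_norm_ge[OF assms l2_zero] assms by simp

lemma op_norm_bound: assumes "T \<in> BL" "x \<in> l2" shows "vnorm (T x) \<le> op_norm T * vnorm x"
proof (cases "vnorm x = 0")
  case True
  then have "x = (\<lambda>n. 0)" using vnorm_zero_iff[OF assms(2)] by simp
  then show ?thesis using assms by simp
next
  case False
  then have pos: "vnorm x > 0" using vnorm_nonneg[OF assms(2)] by linarith
  define u where "u = (\<lambda>n. complex_of_real (1 / vnorm x) * x n)"
  have u: "u \<in> l2" unfolding u_def by (rule l2_scale[OF assms(2)])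
  have vu0: "vnorm u = cmod (complex_of_real (1 / vnorm x)) * vnorm x"
    unfolding u_def by (rule vnorm_scale[OF assms(2)])
  have vu: "vnorm u = 1" using vu0 pos by (simp add: norm_divide)
  have Tu: "T u = (\<lambda>n. complex_of_real (1 / vnorm x) * T x n)" unfolding u_def by (rule BL_scale[OF assms])
  have "vnorm (T u) = cmod (complex_of_real (1 / vnorm x)) * vnorm (T x)"
    unfolding Tu by (rule vnorm_scale) (use assms in simp)
  then have "vnorm (T u) = (1 / vnorm x) * vnorm (T x)" using pos by (simp add: norm_divide)
  moreover have "vnorm (T u) \<le> op_norm T" using op_norm_ge[OF assms(1) u] vu by simp
  ultimately have "(1 / vnorm x) * vnorm (T x) \<le> op_norm T" by simp
  then show ?thesis using pos by (simp add: field_simps)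
qed

lemma op_norm_le: assumes "\<And>x. x \<in> l2 \<Longrightarrow> vnorm x \<le> 1 \<Longrightarrow> vnorm (T x) \<le> K" shows "op_norm T \<le> K"
  unfolding op_norm_def using assms by (intro cSup_least) auto

lemma op_norm_le2: assumes "0 \<le> K" "\<And>x. x \<in> l2 \<Longrightarrow> vnorm (T x) \<le> K * vnorm x" shows "op_norm T \<le> K"
proof (rule op_norm_le)
  fix x assume "x \<in> l2" "vnorm x \<le> 1"
  then have "K * vnorm x \<le> K * 1" using assms by (intro mult_left_mono) auto
  then show "vnorm (T x) \<le> K" using assms(2)[OF \<open>x \<in> l2\<close>] by simp
qed

subsection \<open>Closure properties of BL\<close>

lemma BLI:
  assumes "\<And>x. x \<in> l2 \<Longrightarrow> T x \<in> l2"
    "\<And>x y c. x \<in> l2 \<Longrightarrow> y \<in> l2 \<Longrightarrow> T (\<lambda>n. c * x n + y n) = (\<lambda>n. c * T x n + T y n)"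
    "\<And>x. x \<in> l2 \<Longrightarrow> vnorm (T x) \<le> K * vnorm x"
    "\<And>x. x \<notin> l2 \<Longrightarrow> T x = (\<lambda>_. 0)"
  shows "T \<in> BL"
  unfolding BL_def bounded_op_def using assms by blast

lemma BL_op_zero[simp,intro]: "op_zero \<in> BL"
  by (rule BLI[where K=0]) auto

lemma BL_op_add[simp,intro]: assumes "T \<in> BL" "S \<in> BL" shows "op_add T S \<in> BL"
proof -
  obtain K1 where K1: "K1 \<ge> 0" "\<And>x. x \<in> l2 \<Longrightarrow> vnorm (T x) \<le> K1 * vnorm x" using BL_bound[OF assms(1)] by blast
  obtain K2 where K2: "K2 \<ge> 0" "\<And>x. x \<in> l2 \<Longrightarrow> vnorm (S x) \<le> K2 * vnorm x" using BL_bound[OF assms(2)] by blast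
  show ?thesis
  proof (rule BLI[where K="K1+K2"])
    fix x assume x: "x \<in> l2"
    show "op_add T S x \<in> l2" using x assms by simp
    have "vnorm (\<lambda>n. T x n + S x n) \<le> vnorm (T x) + vnorm (S x)" using x assms by (intro vnorm_triangle) auto
    also have "\<dots> \<le> (K1 + K2) * vnorm x" using K1(2)[OF x] K2(2)[OF x] by (simp add: algebra_simps)
    finally show "vnorm (op_add T S x) \<le> (K1 + K2) * vnorm x" by simp
  next
    fix x y c assume "x \<in> l2" "y \<in> l2"
    then have "op_add T S (\<lambda>n. c * x n + y n) = (\<lambda>n. (c * T x n + T y n) + (c * S x n + S y n))"
      using assms by (simp add: BL_lin)
    then show "op_add T S (\<lambda>n. c * x n + y n) = (\<lambda>n. c * op_add T S x n + op_add T S y n)"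
      by (simp add: algebra_simps)
  next
    fix x assume "x \<notin> l2" then show "op_add T S x = (\<lambda>_. 0)" using assms by (simp add: BL_out)
  qed
qed

lemma BL_op_scale[simp,intro]: assumes "T \<in> BL" shows "op_scale c T \<in> BL"
proof -
  obtain K1 where K1: "K1 \<ge> 0" "\<And>x. x \<in> l2 \<Longrightarrow> vnorm (T x) \<le> K1 * vnorm x" using BL_bound[OF assms(1)] by blast
  show ?thesis
  proof (rule BLI[where K="cmod c * K1"])
    fix x assume x: "x \<in> l2"
    show "op_scale c T x \<in> l2" using x assms by simp
    have "vnorm (\<lambda>n. c * T x n) = cmod c * vnorm (T x)" using x assms by (intro vnorm_scale) auto
    also have "\<dots> \<le> cmod c * (K1 * vnorm x)" using K1(2)[OF x] by (intro mult_left_mono) auto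
    finally show "vnorm (op_scale c T x) \<le> cmod c * K1 * vnorm x" by simp
  next
    fix x y d assume "x \<in> l2" "y \<in> l2"
    then have "op_scale c T (\<lambda>n. d * x n + y n) = (\<lambda>n. c * (d * T x n + T y n))"
      using assms by (simp add: BL_lin)
    then show "op_scale c T (\<lambda>n. d * x n + y n) = (\<lambda>n. d * op_scale c T x n + op_scale c T y n)"
      by (simp add: algebra_simps)
  next
    fix x assume "x \<notin> l2" then show "op_scale c T x = (\<lambda>_. 0)" using assms by (simp add: BL_out)
  qed
qed

lemma BL_op_mul[simp,intro]: assumes "T \<in> BL" "S \<in> BL" shows "op_mul T S \<in> BL"
proof -
  obtain K1 where K1: "K1 \<ge> 0" "\<And>x. x \<in> l2 \<Longrightarrow> vnorm (T x) \<le> K1 * vnorm x" using BL_bound[OF assms(1)] by blast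
  obtain K2 where K2: "K2 \<ge> 0" "\<And>x. x \<in> l2 \<Longrightarrow> vnorm (S x) \<le> K2 * vnorm x" using BL_bound[OF assms(2)] by blast
  show ?thesis
  proof (rule BLI[where K="K1*K2"])
    fix x assume x: "x \<in> l2"
    show "op_mul T S x \<in> l2" using x assms by simp
    have "vnorm (T (S x)) \<le> K1 * vnorm (S x)" using x assms K1 by auto
    also have "\<dots> \<le> K1 * (K2 * vnorm x)" using K2(2)[OF x] K1(1) by (intro mult_left_mono) auto
    finally show "vnorm (op_mul T S x) \<le> K1 * K2 * vnorm x" by simp
  next
    fix x y d assume "x \<in> l2" "y \<in> l2"
    then show "op_mul T S (\<lambda>n. d * x n + y n) = (\<lambda>n. d * op_mul T S x n + op_mul T S y n)"
      using assms by (simp add: BL_lin)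
  next
    fix x assume "x \<notin> l2" then show "op_mul T S x = (\<lambda>_. 0)" using assms by (simp add: BL_out)
  qed
qed

lemma op_eqI: assumes "\<And>x. x \<in> l2 \<Longrightarrow> F x = G x" "\<And>x. x \<notin> l2 \<Longrightarrow> F x = G x" shows "F = G"
  using assms by (metis ext)

lemma mul_add_left: "op_mul (op_add T S) R = op_add (op_mul T R) (op_mul S R)"
  by (rule ext) simp
lemma mul_scale_left: "op_mul (op_scale c T) R = op_scale c (op_mul T R)"
  by (rule ext) simp
lemma mul_add_right: assumes "R \<in> BL" "T \<in> BL" "S \<in> BL"
  shows "op_mul R (op_add T S) = op_add (op_mul R T) (op_mul R S)"
  by (rule op_eqI) (use assms in \<open>auto simp: BL_add BL_out\<close>)
lemma mul_scale_right: assumes "R \<in> BL" "T \<in> BL"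
  shows "op_mul R (op_scale c T) = op_scale c (op_mul R T)"
  by (rule op_eqI) (use assms in \<open>auto simp: BL_scale BL_out\<close>)
lemma mul_assoc: "op_mul (op_mul T S) R = op_mul T (op_mul S R)"
  by (rule ext) simp
lemma mul_zero_left[simp]: "op_mul op_zero T = op_zero"
  by (rule ext) simp
lemma mul_zero_right[simp]: "T \<in> BL \<Longrightarrow> op_mul T op_zero = op_zero"
  by (rule ext) simp

definition ev :: "nat \<Rightarrow> nat \<Rightarrow> complex" where "ev k = (\<lambda>n. if n = k then 1 else 0)"
definition trunc :: "nat \<Rightarrow> (nat \<Rightarrow> complex) \<Rightarrow> nat \<Rightarrow> complex" where
  "trunc N x = (\<lambda>n. if n < N then x n else 0)"

lemma ev_l2[simp,intro]: "ev k \<in> l2"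
  unfolding l2_def ev_def mem_Collect_eq by (rule summable_finite[of "{k}"]) auto

lemma trunc_l2[simp,intro]: "trunc N x \<in> l2"
  unfolding l2_def trunc_def mem_Collect_eq by (rule summable_finite[of "{..<N}"]) auto

lemma trunc_Suc: "trunc (Suc N) x = (\<lambda>n. x N * ev N n + trunc N x n)"
proof (rule ext)
  fix n show "trunc (Suc N) x n = x N * ev N n + trunc N x n"
    unfolding trunc_def ev_def by (cases "n < N"; cases "n = N") auto
qed

lemma trunc_0: "trunc 0 x = (\<lambda>n. 0)"
  unfolding trunc_def by simp

lemma inner_diff: assumes "a \<in> l2" "b \<in> l2" "z \<in> l2"
  shows "inner2 (\<lambda>n. a n - b n) z = inner2 a z - inner2 b z"
proof -
  have "inner2 (\<lambda>n. (-1) * b n + a n) z = (-1) * inner2 b z + inner2 a z"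
    by (rule inner_lin[OF assms(2,1,3)])
  moreover have "(\<lambda>n. (-1) * b n + a n) = (\<lambda>n. a n - b n)" by (rule ext) simp
  ultimately show ?thesis by simp
qed

lemma inner_diff2: assumes "a \<in> l2" "b \<in> l2" "z \<in> l2"
  shows "inner2 z (\<lambda>n. a n - b n) = inner2 z a - inner2 z b"
proof -
  have "inner2 z (\<lambda>n. (-1) * b n + a n) = cnj (-1) * inner2 z b + inner2 z a"
    by (rule inner_lin2[OF assms(2,1,3)])
  moreover have "(\<lambda>n. (-1) * b n + a n) = (\<lambda>n. a n - b n)" by (rule ext) simp
  ultimately show ?thesis by simp
qed

lemma inner_add: assumes "a \<in> l2" "b \<in> l2" "z \<in> l2"
  shows "inner2 (\<lambda>n. a n + b n) z = inner2 a z + inner2 b z"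
  using inner_lin[OF assms, of 1] by simp
lemma inner_add2: assumes "a \<in> l2" "b \<in> l2" "z \<in> l2"
  shows "inner2 z (\<lambda>n. a n + b n) = inner2 z a + inner2 z b"
  using inner_lin2[OF assms, of 1] by simp
lemma inner_scale: assumes "a \<in> l2" "z \<in> l2"
  shows "inner2 (\<lambda>n. c * a n) z = c * inner2 a z"
  using inner_lin[OF assms(1) l2_zero assms(2), of c] by simp
lemma inner_scale2: assumes "a \<in> l2" "z \<in> l2"
  shows "inner2 z (\<lambda>n. c * a n) = cnj c * inner2 z a"
  using inner_lin2[OF assms(1) l2_zero assms(2), of c] by simp

lemma T_trunc: assumes "T \<in> BL" "y \<in> l2"
  shows "inner2 (T (trunc N x)) y = (\<Sum>k<N. x k * inner2 (T (ev k)) y)"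
proof (induction N)
  case 0
  then show ?case using assms by (simp add: trunc_0)
next
  case (Suc N)
  have "T (trunc (Suc N) x) = (\<lambda>n. x N * T (ev N) n + T (trunc N x) n)"
    unfolding trunc_Suc by (rule BL_lin[OF assms(1)]) auto
  then have "inner2 (T (trunc (Suc N) x)) y = x N * inner2 (T (ev N)) y + inner2 (T (trunc N x)) y"
    using assms by (simp add: inner_lin)
  then show ?case using Suc by simp
qed

lemma vnorm_trunc: "vnorm (trunc N z) = sqrt (\<Sum>k<N. (cmod (z k))^2)"
proof -
  have "(\<Sum>n. (cmod (trunc N z n))^2) = (\<Sum>n<N. (cmod (trunc N z n))^2)"
    by (rule suminf_finite) (auto simp: trunc_def)
  also have "\<dots> = (\<Sum>n<N. (cmod (z n))^2)" by (rule sum.cong) (auto simp: trunc_def)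
  finally show ?thesis unfolding vnorm_def by simp
qed

lemma tail_tendsto: assumes "x \<in> l2" shows "(\<lambda>N. vnorm (\<lambda>n. x n - trunc N x n)) \<longlonglongrightarrow> 0"
proof -
  define f where "f = (\<lambda>n. (cmod (x n))^2)"
  have sf: "summable f" using assms by (simp add: f_def l2_def)
  have eq: "vnorm (\<lambda>n. x n - trunc N x n) = sqrt (suminf f - sum f {..<N})" for N
  proof -
    define a where "a = (\<lambda>n. if n < N then f n else 0)"
    have sa: "summable a" unfolding a_def by (rule summable_finite[of "{..<N}"]) auto
    have suma: "suminf a = sum f {..<N}"
      unfolding a_def by (subst suminf_finite[of "{..<N}"]) auto
    have "(\<lambda>n. (cmod (x n - trunc N x n))^2) = (\<lambda>n. f n - a n)"
      by (rule ext) (simp add: a_def f_def trunc_def)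
    then have "(\<Sum>n. (cmod (x n - trunc N x n))^2) = (\<Sum>n. f n - a n)" by simp
    also have "\<dots> = suminf f - suminf a" by (rule suminf_diff[OF sf sa, symmetric])
    finally show ?thesis unfolding vnorm_def suma by simp
  qed
  have "(\<lambda>N. sum f {..<N}) \<longlonglongrightarrow> suminf f" by (rule summable_LIMSEQ[OF sf])
  then have "(\<lambda>N. suminf f - sum f {..<N}) \<longlonglongrightarrow> suminf f - suminf f" by (intro tendsto_diff) auto
  then have "(\<lambda>N. sqrt (suminf f - sum f {..<N})) \<longlonglongrightarrow> sqrt 0" by (intro tendsto_real_sqrt) simp
  then show ?thesis unfolding eq by simp
qed

definition adjf :: "l2op \<Rightarrow> l2op" where
  "adjf T = (\<lambda>y. if y \<in> l2 then (\<lambda>k. cnj (inner2 (T (ev k)) y)) else (\<lambda>n. 0))"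

lemma adjf_partial: assumes "T \<in> BL" "y \<in> l2"
  shows "inner2 (T (trunc N x)) y = (\<Sum>k<N. x k * cnj (adjf T y k))"
  using T_trunc[OF assms] assms by (simp add: adjf_def)

lemma sqrt_bound_aux: assumes "0 \<le> P" "0 \<le> M" "P \<le> M * sqrt P" shows "P \<le> M^2"
proof (cases "P = 0")
  case True then show ?thesis by simp
next
  case False
  then have sp: "sqrt P > 0" using assms by simp
  have h: "sqrt P * sqrt P \<le> M * sqrt P" using assms by simp
  have "sqrt P \<le> M" by (rule mult_right_le_imp_le[OF h sp])
  then have "(sqrt P)^2 \<le> M^2" using sp by (intro power_mono) auto
  then show ?thesis using assms by simp
qed

lemma adjf_l2_bound: assumes "T \<in> BL" "y \<in> l2"
  shows "adjf T y \<in> l2" "vnorm (adjf T y) \<le> op_norm T * vnorm y"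
proof -
  define z where "z = adjf T y"
  define M where "M = op_norm T * vnorm y"
  have M0: "0 \<le> M" unfolding M_def using assms by simp
  have P: "(\<Sum>k<N. (cmod (z k))^2) \<le> M^2" for N
  proof -
    define P where "P = (\<Sum>k<N. (cmod (z k))^2)"
    have P0: "0 \<le> P" unfolding P_def by (auto intro: sum_nonneg)
    have "complex_of_real P = (\<Sum>k<N. z k * cnj (z k))"
      unfolding P_def of_real_sum by (simp only: complex_norm_square)
    also have "\<dots> = inner2 (T (trunc N z)) y"
      using adjf_partial[OF assms, of N z] by (simp add: z_def)
    finally have e: "complex_of_real P = inner2 (T (trunc N z)) y" .
    have "P = cmod (complex_of_real P)" using P0 by simp
    also have "\<dots> \<le> vnorm (T (trunc N z)) * vnorm y" unfolding e using assms by (intro inner_CS) auto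
    also have "\<dots> \<le> (op_norm T * vnorm (trunc N z)) * vnorm y"
      using assms by (intro mult_right_mono op_norm_bound) auto
    also have "\<dots> = M * sqrt P" unfolding M_def P_def vnorm_trunc by simp
    finally show ?thesis using sqrt_bound_aux[OF P0 M0] unfolding P_def by simp
  qed
  have sz: "summable (\<lambda>k. (cmod (z k))^2)"
    by (rule summableI_nonneg_bounded[where x="M^2"]) (use P in auto)
  then show zl: "adjf T y \<in> l2" unfolding z_def l2_def by simp
  have "(\<Sum>k. (cmod (z k))^2) \<le> M^2" by (rule suminf_le_const[OF sz P])
  then have "sqrt (\<Sum>k. (cmod (z k))^2) \<le> sqrt (M^2)" by (rule real_sqrt_le_mono)
  then show "vnorm (adjf T y) \<le> op_norm T * vnorm y" using M0 unfolding vnorm_def z_def M_def by simp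
qed

lemma adjf_identity: assumes "T \<in> BL" "x \<in> l2" "y \<in> l2"
  shows "inner2 (T x) y = inner2 x (adjf T y)"
proof -
  have "(\<lambda>N. inner2 (T (trunc N x)) y - inner2 (T x) y) \<longlonglongrightarrow> 0"
  proof (rule Lim_null_comparison)
    show "(\<lambda>N. op_norm T * vnorm (\<lambda>n. x n - trunc N x n) * vnorm y) \<longlonglongrightarrow> 0"
      using tail_tendsto[OF assms(2)] by (auto intro!: tendsto_eq_intros)
    show "\<forall>\<^sub>F N in sequentially. norm (inner2 (T (trunc N x)) y - inner2 (T x) y)
            \<le> op_norm T * vnorm (\<lambda>n. x n - trunc N x n) * vnorm y"
    proof (rule always_eventually, rule allI)
      fix N
      have d: "T (\<lambda>n. x n - trunc N x n) = (\<lambda>n. T x n - T (trunc N x) n)"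
        using assms by (intro BL_diff) auto
      have "inner2 (T (trunc N x)) y - inner2 (T x) y = - inner2 (\<lambda>n. T x n - T (trunc N x) n) y"
        using assms by (simp add: inner_diff)
      then have "norm (inner2 (T (trunc N x)) y - inner2 (T x) y) = cmod (inner2 (T (\<lambda>n. x n - trunc N x n)) y)"
        unfolding d by simp
      also have "\<dots> \<le> vnorm (T (\<lambda>n. x n - trunc N x n)) * vnorm y"
        using assms by (intro inner_CS) auto
      also have "\<dots> \<le> (op_norm T * vnorm (\<lambda>n. x n - trunc N x n)) * vnorm y"
        using assms by (intro mult_right_mono op_norm_bound) auto
      finally show "norm (inner2 (T (trunc N x)) y - inner2 (T x) y)
            \<le> op_norm T * vnorm (\<lambda>n. x n - trunc N x n) * vnorm y" by simp
    qed
  qed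
  then have "(\<lambda>N. inner2 (T (trunc N x)) y) \<longlonglongrightarrow> inner2 (T x) y" by (rule LIM_zero_cancel)
  then have "(\<lambda>N. \<Sum>k<N. x k * cnj (adjf T y k)) \<longlonglongrightarrow> inner2 (T x) y"
    using adjf_partial[OF assms(1,3)] by simp
  then have "(\<lambda>k. x k * cnj (adjf T y k)) sums inner2 (T x) y" unfolding sums_def .
  then show ?thesis unfolding inner2_def by (simp add: sums_iff)
qed

lemma adjf_BL: assumes "T \<in> BL" shows "adjf T \<in> BL"
proof (rule BLI[where K="op_norm T"])
  fix x assume "x \<in> l2"
  then show "adjf T x \<in> l2" "vnorm (adjf T x) \<le> op_norm T * vnorm x"
    using adjf_l2_bound[OF assms] by auto
next
  fix x y c assume xy: "x \<in> l2" "y \<in> l2"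
  have "inner2 (T (ev k)) (\<lambda>n. c * x n + y n) = cnj c * inner2 (T (ev k)) x + inner2 (T (ev k)) y" for k
    using assms xy by (intro inner_lin2) auto
  then show "adjf T (\<lambda>n. c * x n + y n) = (\<lambda>n. c * adjf T x n + adjf T y n)"
    using xy by (simp add: adjf_def)
next
  fix x assume "x \<notin> l2" then show "adjf T x = (\<lambda>_. 0)" by (simp add: adjf_def)
qed

lemma adj_uniq_aux: assumes "S1 \<in> BL" "S2 \<in> BL"
  "\<And>x y. x \<in> l2 \<Longrightarrow> y \<in> l2 \<Longrightarrow> inner2 x (S1 y) = inner2 x (S2 y)"
  shows "S1 = S2"
proof (rule op_eqI)
  fix y assume y: "y \<in> l2"
  define d where "d = (\<lambda>n. S1 y n - S2 y n)"
  have dl: "d \<in> l2" unfolding d_def using assms y by auto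
  have "inner2 d d = inner2 d (S1 y) - inner2 d (S2 y)"
    unfolding d_def using assms y by (intro inner_diff2) auto
  also have "\<dots> = 0" using assms(3)[OF dl y] by simp
  finally have "(vnorm d)^2 = 0" using inner_self[OF dl] by simp
  then have "d = (\<lambda>n. 0)" using vnorm_zero_iff[OF dl] by simp
  then show "S1 y = S2 y" unfolding d_def by (metis eq_iff_diff_eq_0 ext)
next
  fix y assume "y \<notin> l2" then show "S1 y = S2 y" using assms by (simp add: BL_out)
qed

definition adj_rel :: "l2op \<Rightarrow> l2op \<Rightarrow> bool" where
  "adj_rel T S \<longleftrightarrow> S \<in> BL \<and> (\<forall>x\<in>l2. \<forall>y\<in>l2. inner2 (T x) y = inner2 x (S y))"

lemma adj_ex1: assumes "T \<in> BL" shows "\<exists>!S. adj_rel T S"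
proof (rule ex1I)
  show "adj_rel T (adjf T)" unfolding adj_rel_def using adjf_BL[OF assms] adjf_identity[OF assms] by blast
next
  fix S assume "adj_rel T S"
  then show "S = adjf T" unfolding adj_rel_def
    using adjf_BL[OF assms] adjf_identity[OF assms] by (intro adj_uniq_aux) auto
qed

lemma op_adj_rel: assumes "T \<in> BL" shows "adj_rel T (op_adj T)"
proof -
  have "op_adj T = (THE S. adj_rel T S)" unfolding op_adj_def adj_rel_def by simp
  then show ?thesis using theI'[OF adj_ex1[OF assms]] by simp
qed

lemma adj_BL[simp,intro]: "T \<in> BL \<Longrightarrow> op_adj T \<in> BL"
  using op_adj_rel unfolding adj_rel_def by blast

lemma adj_inner: "T \<in> BL \<Longrightarrow> x \<in> l2 \<Longrightarrow> y \<in> l2 \<Longrightarrow> inner2 (T x) y = inner2 x (op_adj T y)"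
  using op_adj_rel unfolding adj_rel_def by blast

lemma adj_unique: assumes "T \<in> BL" "S \<in> BL" "\<And>x y. x \<in> l2 \<Longrightarrow> y \<in> l2 \<Longrightarrow> inner2 (T x) y = inner2 x (S y)"
  shows "op_adj T = S"
  using adj_ex1[OF assms(1)] op_adj_rel[OF assms(1)] assms unfolding adj_rel_def by blast

lemma adj_inner2: "T \<in> BL \<Longrightarrow> x \<in> l2 \<Longrightarrow> y \<in> l2 \<Longrightarrow> inner2 (op_adj T x) y = inner2 x (T y)"
proof -
  assume a: "T \<in> BL" "x \<in> l2" "y \<in> l2"
  have "inner2 (op_adj T x) y = cnj (inner2 y (op_adj T x))" using a by (intro inner_cnj) auto
  also have "\<dots> = cnj (inner2 (T y) x)" using adj_inner[OF a(1,3,2)] by simp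
  also have "\<dots> = inner2 x (T y)" using a by (simp add: inner_cnj[of x "T y"])
  finally show ?thesis .
qed

lemma adj_adj[simp]: "T \<in> BL \<Longrightarrow> op_adj (op_adj T) = T"
  by (rule adj_unique) (auto simp: adj_inner2)

lemma adj_add: assumes "T \<in> BL" "S \<in> BL" shows "op_adj (op_add T S) = op_add (op_adj T) (op_adj S)"
  by (rule adj_unique) (use assms in \<open>auto simp: inner_add inner_add2 adj_inner\<close>)

lemma adj_scale: assumes "T \<in> BL" shows "op_adj (op_scale c T) = op_scale (cnj c) (op_adj T)"
  by (rule adj_unique) (use assms in \<open>auto simp: inner_scale inner_scale2 adj_inner\<close>)

lemma adj_mul: assumes "T \<in> BL" "S \<in> BL" shows "op_adj (op_mul T S) = op_mul (op_adj S) (op_adj T)"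
  by (rule adj_unique) (use assms in \<open>auto simp: adj_inner\<close>)

lemma adj_zero[simp]: "op_adj op_zero = op_zero"
  by (rule adj_unique) auto

definition cauchy2 :: "(nat \<Rightarrow> nat \<Rightarrow> complex) \<Rightarrow> bool" where
  "cauchy2 \<sigma> \<longleftrightarrow> (\<forall>e>0. \<exists>N. \<forall>m\<ge>N. \<forall>n\<ge>N. vnorm (\<lambda>i. \<sigma> m i - \<sigma> n i) < e)"

definition uball :: "(nat \<Rightarrow> nat \<Rightarrow> complex) \<Rightarrow> bool" where
  "uball xs \<longleftrightarrow> (\<forall>k. xs k \<in> l2 \<and> vnorm (xs k) \<le> 1)"

lemma compact_alt: "compact_l2op T \<longleftrightarrow> T \<in> BL \<and>
   (\<forall>xs. uball xs \<longrightarrow> (\<exists>r. strict_mono r \<and> cauchy2 (\<lambda>k. T (xs (r k)))))"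
  unfolding compact_l2op_def cauchy2_def uball_def vdiff_def by simp

lemma compactD: "compact_l2op T \<Longrightarrow> uball xs \<Longrightarrow> \<exists>r. strict_mono r \<and> cauchy2 (\<lambda>k. T (xs (r k)))"
  unfolding compact_alt by blast
lemma compact_BL: "compact_l2op T \<Longrightarrow> T \<in> BL"
  unfolding compact_alt by blast
lemma compactI: "T \<in> BL \<Longrightarrow> (\<And>xs. uball xs \<Longrightarrow> \<exists>r. strict_mono r \<and> cauchy2 (\<lambda>k. T (xs (r k)))) \<Longrightarrow> compact_l2op T"
  unfolding compact_alt by blast

lemma uball_sub: "uball xs \<Longrightarrow> uball (\<lambda>k. xs (r k))"
  unfolding uball_def by blast

lemma cauchy2_sub: assumes "cauchy2 \<sigma>" "strict_mono r" shows "cauchy2 (\<lambda>k. \<sigma> (r k))"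
  unfolding cauchy2_def
proof (intro allI impI)
  fix e :: real assume "e > 0"
  then obtain N where N: "\<forall>m\<ge>N. \<forall>n\<ge>N. vnorm (\<lambda>i. \<sigma> m i - \<sigma> n i) < e"
    using assms(1) unfolding cauchy2_def by blast
  have "\<forall>m\<ge>N. \<forall>n\<ge>N. vnorm (\<lambda>i. \<sigma> (r m) i - \<sigma> (r n) i) < e"
  proof (intro allI impI)
    fix m n assume "m \<ge> N" "n \<ge> N"
    moreover have "r m \<ge> m" "r n \<ge> n" using assms(2) by (auto simp: seq_suble)
    ultimately show "vnorm (\<lambda>i. \<sigma> (r m) i - \<sigma> (r n) i) < e" using N by auto
  qed
  then show "\<exists>N. \<forall>m\<ge>N. \<forall>n\<ge>N. vnorm (\<lambda>i. \<sigma> (r m) i - \<sigma> (r n) i) < e" by blast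
qed

lemma cauchy2_lin: assumes "\<And>k. \<sigma> k \<in> l2" "\<And>k. \<tau> k \<in> l2" "cauchy2 \<sigma>" "cauchy2 \<tau>"
  shows "cauchy2 (\<lambda>k i. c * \<sigma> k i + \<tau> k i)"
  unfolding cauchy2_def
proof (intro allI impI)
  fix e :: real assume e: "e > 0"
  define e1 where "e1 = e / (2 * (cmod c + 1))"
  have cp: "0 < cmod c + 1" using norm_ge_zero[of c] by linarith
  have e1: "e1 > 0" unfolding e1_def using e cp by (intro divide_pos_pos mult_pos_pos) auto
  obtain N1 where N1: "\<forall>m\<ge>N1. \<forall>n\<ge>N1. vnorm (\<lambda>i. \<sigma> m i - \<sigma> n i) < e1"
    using assms(3) e1 unfolding cauchy2_def by blast
  obtain N2 where N2: "\<forall>m\<ge>N2. \<forall>n\<ge>N2. vnorm (\<lambda>i. \<tau> m i - \<tau> n i) < e/2"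
    using assms(4) e unfolding cauchy2_def by (meson half_gt_zero)
  have "vnorm (\<lambda>i. (c * \<sigma> m i + \<tau> m i) - (c * \<sigma> n i + \<tau> n i)) < e"
    if "m \<ge> max N1 N2" "n \<ge> max N1 N2" for m n
  proof -
    have eq: "(\<lambda>i. (c * \<sigma> m i + \<tau> m i) - (c * \<sigma> n i + \<tau> n i)) = (\<lambda>i. c * (\<sigma> m i - \<sigma> n i) + (\<tau> m i - \<tau> n i))"
      by (rule ext) (simp add: algebra_simps)
    have l: "(\<lambda>i. \<sigma> m i - \<sigma> n i) \<in> l2" "(\<lambda>i. \<tau> m i - \<tau> n i) \<in> l2" using assms by auto
    have "vnorm (\<lambda>i. c * (\<sigma> m i - \<sigma> n i) + (\<tau> m i - \<tau> n i))
        \<le> vnorm (\<lambda>i. c * (\<sigma> m i - \<sigma> n i)) + vnorm (\<lambda>i. \<tau> m i - \<tau> n i)"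
      using l by (intro vnorm_triangle) auto
    also have "\<dots> = cmod c * vnorm (\<lambda>i. \<sigma> m i - \<sigma> n i) + vnorm (\<lambda>i. \<tau> m i - \<tau> n i)"
      using vnorm_scale[OF l(1)] by simp
    also have "\<dots> \<le> cmod c * e1 + vnorm (\<lambda>i. \<tau> m i - \<tau> n i)"
      using N1 that by (intro add_right_mono mult_left_mono) (auto intro: less_imp_le)
    also have "\<dots> < cmod c * e1 + e/2" using N2 that by auto
    also have "cmod c * e1 \<le> e / 2"
    proof -
      have "cmod c * e1 = e / 2 * (cmod c / (cmod c + 1))" unfolding e1_def by (simp add: field_simps)
      also have "\<dots> \<le> e / 2 * 1" using e cp by (intro mult_left_mono) (auto simp: divide_le_eq)
      finally show ?thesis by simp
    qed
    finally show ?thesis unfolding eq by simp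
  qed
  then show "\<exists>N. \<forall>m\<ge>N. \<forall>n\<ge>N. vnorm (\<lambda>i. (c * \<sigma> m i + \<tau> m i) - (c * \<sigma> n i + \<tau> n i)) < e" by blast
qed

lemma cauchy2_op: assumes "T \<in> BL" "\<And>k. \<sigma> k \<in> l2" "cauchy2 \<sigma>"
  shows "cauchy2 (\<lambda>k. T (\<sigma> k))"
  unfolding cauchy2_def
proof (intro allI impI)
  fix e :: real assume e: "e > 0"
  define M where "M = op_norm T + 1"
  have M: "M > 0" unfolding M_def using assms by (simp add: add_nonneg_pos)
  obtain N where N: "\<forall>m\<ge>N. \<forall>n\<ge>N. vnorm (\<lambda>i. \<sigma> m i - \<sigma> n i) < e / M"
    using assms(3) e M unfolding cauchy2_def by (meson divide_pos_pos)
  have "vnorm (\<lambda>i. T (\<sigma> m) i - T (\<sigma> n) i) < e" if "m \<ge> N" "n \<ge> N" for m n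
  proof -
    have "vnorm (\<lambda>i. T (\<sigma> m) i - T (\<sigma> n) i) = vnorm (T (\<lambda>i. \<sigma> m i - \<sigma> n i))"
      using assms by (simp add: BL_diff)
    also have "\<dots> \<le> op_norm T * vnorm (\<lambda>i. \<sigma> m i - \<sigma> n i)" using assms by (intro op_norm_bound) auto
    also have "\<dots> \<le> M * vnorm (\<lambda>i. \<sigma> m i - \<sigma> n i)" unfolding M_def using assms
      by (intro mult_right_mono) auto
    also have "\<dots> < M * (e / M)" using N that M by (intro mult_strict_left_mono) auto
    also have "\<dots> = e" using M by simp
    finally show ?thesis .
  qed
  then show "\<exists>N. \<forall>m\<ge>N. \<forall>n\<ge>N. vnorm (\<lambda>i. T (\<sigma> m) i - T (\<sigma> n) i) < e" by blast
qed

lemma compact_zero[simp,intro]: "compact_l2op op_zero"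
proof (rule compactI)
  fix xs :: "nat \<Rightarrow> nat \<Rightarrow> complex"
  have "cauchy2 (\<lambda>k. op_zero (xs k))" unfolding cauchy2_def by simp
  then show "\<exists>r. strict_mono r \<and> cauchy2 (\<lambda>k. op_zero (xs (r k)))"
    using strict_mono_id unfolding cauchy2_def by auto
qed simp

lemma compact_lin: assumes "compact_l2op K1" "compact_l2op K2"
  shows "compact_l2op (op_add (op_scale c K1) K2)"
proof (rule compactI)
  show "op_add (op_scale c K1) K2 \<in> BL" using assms compact_BL by auto
  fix xs assume xs: "uball xs"
  obtain r1 where r1: "strict_mono r1" "cauchy2 (\<lambda>k. K1 (xs (r1 k)))" using compactD[OF assms(1) xs] by blast
  obtain r2 where r2: "strict_mono r2" "cauchy2 (\<lambda>k. K2 (xs (r1 (r2 k))))"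
    using compactD[OF assms(2) uball_sub[OF xs, of r1]] by blast
  have c1: "cauchy2 (\<lambda>k. K1 (xs (r1 (r2 k))))" using cauchy2_sub[OF r1(2) r2(1)] by simp
  have l: "\<And>k. xs k \<in> l2" using xs unfolding uball_def by blast
  have "cauchy2 (\<lambda>k i. c * K1 (xs (r1 (r2 k))) i + K2 (xs (r1 (r2 k))) i)"
    using assms l by (intro cauchy2_lin c1 r2(2)) (auto dest: compact_BL)
  then have "cauchy2 (\<lambda>k. op_add (op_scale c K1) K2 (xs ((r1 \<circ> r2) k)))" by simp
  moreover have "strict_mono (r1 \<circ> r2)" by (rule strict_mono_o[OF r1(1) r2(1)])
  ultimately show "\<exists>r. strict_mono r \<and> cauchy2 (\<lambda>k. op_add (op_scale c K1) K2 (xs (r k)))" by blast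
qed

lemma op_add_zero_right: "op_add T op_zero = T" by (rule ext) simp
lemma op_scale_one: "op_scale 1 T = T" by (rule ext) simp

lemma compact_scale: "compact_l2op K \<Longrightarrow> compact_l2op (op_scale c K)"
  using compact_lin[of K op_zero c] by (simp add: op_add_zero_right)
lemma compact_add: "compact_l2op K1 \<Longrightarrow> compact_l2op K2 \<Longrightarrow> compact_l2op (op_add K1 K2)"
  using compact_lin[of K1 K2 1] by (simp add: op_scale_one)

lemma compact_mul_left: assumes "T \<in> BL" "compact_l2op K" shows "compact_l2op (op_mul T K)"
proof (rule compactI)
  show "op_mul T K \<in> BL" using assms compact_BL by auto
  fix xs assume xs: "uball xs"
  obtain r where r: "strict_mono r" "cauchy2 (\<lambda>k. K (xs (r k)))" using compactD[OF assms(2) xs] by blast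
  have l: "\<And>k. xs k \<in> l2" using xs unfolding uball_def by blast
  have KB: "K \<in> BL" using assms compact_BL by auto
  have "cauchy2 (\<lambda>k. T (K (xs (r k))))" by (rule cauchy2_op[OF assms(1) _ r(2)]) (use KB l in auto)
  then show "\<exists>r. strict_mono r \<and> cauchy2 (\<lambda>k. op_mul T K (xs (r k)))" using r by auto
qed

lemma compact_mul_right: assumes "compact_l2op K" "T \<in> BL" shows "compact_l2op (op_mul K T)"
proof (rule compactI)
  have KB: "K \<in> BL" using assms compact_BL by auto
  show "op_mul K T \<in> BL" using assms KB by auto
  fix xs assume xs: "uball xs"
  have l: "\<And>k. xs k \<in> l2" and b: "\<And>k. vnorm (xs k) \<le> 1" using xs unfolding uball_def by auto
  define M where "M = op_norm T + 1"
  have M: "M > 0" unfolding M_def using assms by (simp add: add_nonneg_pos)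
  define s where "s = complex_of_real (1 / M)"
  have cs: "cmod s = 1 / M" unfolding s_def using M by (simp add: norm_divide)
  have Ms: "complex_of_real M * s = 1" unfolding s_def using M by (simp add: of_real_divide)
  define ys where "ys = (\<lambda>k i. s * T (xs k) i)"
  have ysl: "ys k \<in> l2" for k unfolding ys_def using assms l by (intro l2_scale) auto
  have "uball ys" unfolding uball_def
  proof (intro allI conjI)
    fix k show "ys k \<in> l2" by (rule ysl)
    have "vnorm (ys k) = cmod s * vnorm (T (xs k))"
      unfolding ys_def by (rule vnorm_scale) (use assms l in auto)
    also have "\<dots> = (1 / M) * vnorm (T (xs k))" using cs by simp
    also have "\<dots> \<le> (1 / M) * (op_norm T * vnorm (xs k))" using M assms l
      by (intro mult_left_mono op_norm_bound) auto
    also have "\<dots> \<le> (1 / M) * (M * 1)" using M assms l b unfolding M_def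
      by (intro mult_left_mono mult_mono) auto
    finally show "vnorm (ys k) \<le> 1" using M by simp
  qed
  then obtain r where r: "strict_mono r" "cauchy2 (\<lambda>k. K (ys (r k)))" using compactD[OF assms(1)] by blast
  have c: "cauchy2 (\<lambda>k i. complex_of_real M * K (ys (r k)) i + (\<lambda>k i. 0) k i)"
    by (rule cauchy2_lin[OF _ _ r(2)]) (use KB ysl in \<open>auto simp: cauchy2_def\<close>)
  have Kys: "K (ys k) = (\<lambda>i. s * K (T (xs k)) i)" for k
    unfolding ys_def by (rule BL_scale) (use KB assms l in auto)
  have "(\<lambda>k i. complex_of_real M * K (ys (r k)) i + (\<lambda>k i. 0) k i) = (\<lambda>k. K (T (xs (r k))))"
    by (rule ext)+ (simp add: Kys mult.assoc[symmetric] Ms)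
  then have "cauchy2 (\<lambda>k. K (T (xs (r k))))" using c by simp
  then show "\<exists>r. strict_mono r \<and> cauchy2 (\<lambda>k. op_mul K T (xs (r k)))" using r by auto
qed

lemma compact_adj: assumes "compact_l2op K" shows "compact_l2op (op_adj K)"
proof (rule compactI)
  have KB: "K \<in> BL" using assms compact_BL by auto
  show "op_adj K \<in> BL" using KB by auto
  fix xs assume xs: "uball xs"
  have l: "\<And>k. xs k \<in> l2" and b: "\<And>k. vnorm (xs k) \<le> 1" using xs unfolding uball_def by auto
  have "compact_l2op (op_mul K (op_adj K))" using assms KB by (intro compact_mul_right) auto
  then obtain r where r: "strict_mono r" "cauchy2 (\<lambda>k. K (op_adj K (xs (r k))))"
    using compactD[OF _ xs] by fastforce
  have key: "(vnorm (\<lambda>i. op_adj K (xs a) i - op_adj K (xs b) i))^2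
      \<le> vnorm (\<lambda>i. K (op_adj K (xs a)) i - K (op_adj K (xs b)) i) * 2" for a b
  proof -
    define d where "d = (\<lambda>i. xs a i - xs b i)"
    have dl: "d \<in> l2" unfolding d_def using l by auto
    have vd: "vnorm d \<le> 2" unfolding d_def using vnorm_diff_triangle[OF l[of a] l[of b]] b[of a] b[of b] by simp
    have e1: "op_adj K d = (\<lambda>i. op_adj K (xs a) i - op_adj K (xs b) i)"
      unfolding d_def using KB l by (intro BL_diff) auto
    have e2: "K (\<lambda>i. op_adj K (xs a) i - op_adj K (xs b) i) = (\<lambda>i. K (op_adj K (xs a)) i - K (op_adj K (xs b)) i)"
      using KB l by (intro BL_diff) auto
    have "complex_of_real ((vnorm (op_adj K d))^2) = inner2 (op_adj K d) (op_adj K d)"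
      using KB dl by (intro inner_self[symmetric]) auto
    also have "\<dots> = inner2 (K (op_adj K d)) d" using adj_inner[OF KB _ dl, of "op_adj K d"] KB dl by auto
    finally have "(vnorm (op_adj K d))^2 = cmod (inner2 (K (op_adj K d)) d)"
      by (metis norm_of_real abs_of_nonneg zero_le_power2)
    also have "\<dots> \<le> vnorm (K (op_adj K d)) * vnorm d" using KB dl by (intro inner_CS) auto
    also have "\<dots> \<le> vnorm (K (op_adj K d)) * 2" using vd KB dl by (intro mult_left_mono) auto
    finally show ?thesis by (simp only: e1 e2)
  qed
  have "cauchy2 (\<lambda>k. op_adj K (xs (r k)))"
    unfolding cauchy2_def
  proof (intro allI impI)
    fix e :: real assume e: "e > 0"
    then obtain N where N: "\<forall>m\<ge>N. \<forall>n\<ge>N. vnorm (\<lambda>i. K (op_adj K (xs (r m))) i - K (op_adj K (xs (r n))) i) < e^2 / 2"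
      using r(2) unfolding cauchy2_def by (meson half_gt_zero zero_less_power)
    have "vnorm (\<lambda>i. op_adj K (xs (r m)) i - op_adj K (xs (r n)) i) < e" if "m \<ge> N" "n \<ge> N" for m n
    proof -
      have "(vnorm (\<lambda>i. op_adj K (xs (r m)) i - op_adj K (xs (r n)) i))^2 < e^2"
      proof -
        have "vnorm (\<lambda>i. K (op_adj K (xs (r m))) i - K (op_adj K (xs (r n))) i) < e^2 / 2"
          using N that by blast
        then show ?thesis using key[of "r m" "r n"] by linarith
      qed
      then show ?thesis using e by (simp add: power_less_imp_less_base)
    qed
    then show "\<exists>N. \<forall>m\<ge>N. \<forall>n\<ge>N. vnorm (\<lambda>i. op_adj K (xs (r m)) i - op_adj K (xs (r n)) i) < e" by blast
  qed
  then show "\<exists>r. strict_mono r \<and> cauchy2 (\<lambda>k. op_adj K (xs (r k)))" using r by blast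
qed

definition dl2 :: "(nat \<Rightarrow> complex) \<Rightarrow> (nat \<Rightarrow> complex) \<Rightarrow> real" where
  "dl2 x y = \<bar>vnorm (\<lambda>i. x i - y i)\<bar>"

lemma vnorm_commute: "vnorm (\<lambda>i. x i - y i) = vnorm (\<lambda>i. y i - x i)"
  unfolding vnorm_def by (simp add: norm_minus_commute)

lemma dl2_l2: "x \<in> l2 \<Longrightarrow> y \<in> l2 \<Longrightarrow> dl2 x y = vnorm (\<lambda>i. x i - y i)"
  unfolding dl2_def by simp

lemma dl2_metric: "Metric_space l2 dl2"
proof
  fix x y show "0 \<le> dl2 x y" unfolding dl2_def by simp
  show "dl2 x y = dl2 y x" unfolding dl2_def by (metis vnorm_commute)
next
  fix x y assume a: "x \<in> l2" "y \<in> l2"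
  have "dl2 x y = 0 \<longleftrightarrow> (\<lambda>i. x i - y i) = (\<lambda>i. 0)"
    using vnorm_zero_iff[of "\<lambda>i. x i - y i"] a by (simp add: dl2_l2)
  also have "\<dots> \<longleftrightarrow> x = y" by (auto simp: fun_eq_iff)
  finally show "dl2 x y = 0 \<longleftrightarrow> x = y" .
next
  fix x y z assume a: "x \<in> l2" "y \<in> l2" "z \<in> l2"
  have "(\<lambda>i. x i - z i) = (\<lambda>i. (x i - y i) + (y i - z i))" by (rule ext) simp
  then have "vnorm (\<lambda>i. x i - z i) \<le> vnorm (\<lambda>i. x i - y i) + vnorm (\<lambda>i. y i - z i)"
    using vnorm_triangle[of "\<lambda>i. x i - y i" "\<lambda>i. y i - z i"] a by simp
  then show "dl2 x z \<le> dl2 x y + dl2 y z" using a by (simp add: dl2_l2)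
qed

interpretation L2M: Metric_space l2 dl2 by (rule dl2_metric)

lemma MCauchy_iff: assumes "\<And>k. \<sigma> k \<in> l2" shows "L2M.MCauchy \<sigma> \<longleftrightarrow> cauchy2 \<sigma>"
proof -
  have r: "range \<sigma> \<subseteq> l2" using assms by auto
  have "(\<forall>\<epsilon>>0. \<exists>N. \<forall>n n'. N \<le> n \<longrightarrow> N \<le> n' \<longrightarrow> dl2 (\<sigma> n) (\<sigma> n') < \<epsilon>) \<longleftrightarrow> cauchy2 \<sigma>"
    unfolding cauchy2_def using assms by (simp add: dl2_l2)
  then show ?thesis unfolding L2M.MCauchy_def using r by simp
qed

definition B1 :: "(nat \<Rightarrow> complex) set" where "B1 = {x \<in> l2. vnorm x \<le> 1}"

lemma compact_tb: assumes "K \<in> BL" shows "compact_l2op K \<longleftrightarrow> L2M.mtotally_bounded (K ` B1)"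
proof
  assume c: "compact_l2op K"
  show "L2M.mtotally_bounded (K ` B1)" unfolding L2M.mtotally_bounded_sequentially
  proof (intro conjI allI impI)
    show "K ` B1 \<subseteq> l2" using assms by (auto simp: B1_def)
    fix \<sigma> :: "nat \<Rightarrow> nat \<Rightarrow> complex" assume "range \<sigma> \<subseteq> K ` B1"
    then have "\<forall>k. \<exists>x. x \<in> B1 \<and> \<sigma> k = K x" by blast
    then obtain xs where xs: "\<And>k. xs k \<in> B1" "\<And>k. \<sigma> k = K (xs k)" by metis
    have "uball xs" using xs(1) unfolding uball_def B1_def by auto
    then obtain r where r: "strict_mono r" "cauchy2 (\<lambda>k. K (xs (r k)))" using compactD[OF c] by blast
    have e: "\<sigma> \<circ> r = (\<lambda>k. K (xs (r k)))" by (rule ext) (simp add: xs(2))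
    have "L2M.MCauchy (\<lambda>k. K (xs (r k)))"
      using r(2) by (subst MCauchy_iff) (use xs assms in \<open>auto simp: B1_def\<close>)
    then have "L2M.MCauchy (\<sigma> \<circ> r)" unfolding e .
    then show "\<exists>r. strict_mono r \<and> L2M.MCauchy (\<sigma> \<circ> r)" using r(1) by blast
  qed
next
  assume tb: "L2M.mtotally_bounded (K ` B1)"
  show "compact_l2op K"
  proof (rule compactI[OF assms])
    fix xs assume xs: "uball xs"
    have "range (\<lambda>k. K (xs k)) \<subseteq> K ` B1" using xs unfolding uball_def B1_def by auto
    then obtain r where r: "strict_mono r" "L2M.MCauchy ((\<lambda>k. K (xs k)) \<circ> r)"
      using tb unfolding L2M.mtotally_bounded_sequentially by blast
    have "L2M.MCauchy (\<lambda>k. K (xs (r k)))" using r(2) by (simp add: o_def)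
    then have "cauchy2 (\<lambda>k. K (xs (r k)))"
      by (subst MCauchy_iff[symmetric]) (use xs assms in \<open>auto simp: uball_def\<close>)
    then show "\<exists>r. strict_mono r \<and> cauchy2 (\<lambda>k. K (xs (r k)))" using r(1) by blast
  qed
qed

lemma compact_closed: assumes "T \<in> BL"
  "\<And>e. e > 0 \<Longrightarrow> \<exists>K. compact_l2op K \<and> (\<forall>x\<in>l2. vnorm x \<le> 1 \<longrightarrow> vnorm (\<lambda>i. K x i - T x i) \<le> e)"
  shows "compact_l2op T"
  unfolding compact_tb[OF assms(1)] L2M.mtotally_bounded_def
proof (intro allI impI)
  fix \<epsilon> :: real assume \<epsilon>: "\<epsilon> > 0"
  obtain K where K: "compact_l2op K" "\<forall>x\<in>l2. vnorm x \<le> 1 \<longrightarrow> vnorm (\<lambda>i. K x i - T x i) \<le> \<epsilon>/3"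
    using assms(2)[of "\<epsilon>/3"] \<epsilon> by auto
  have KB: "K \<in> BL" using K compact_BL by auto
  have "L2M.mtotally_bounded (K ` B1)" using K(1) compact_tb[OF KB] by simp
  then obtain F where F: "finite F" "F \<subseteq> K ` B1" "K ` B1 \<subseteq> (\<Union>x\<in>F. L2M.mball x (\<epsilon>/3))"
    unfolding L2M.mtotally_bounded_def using \<epsilon> by (meson divide_pos_pos zero_less_numeral)
  obtain G where G: "G \<subseteq> B1" "finite G" "F = K ` G" using finite_subset_image[OF F(1,2)] by blast
  have "T ` B1 \<subseteq> (\<Union>x\<in>T ` G. L2M.mball x \<epsilon>)"
  proof
    fix y assume "y \<in> T ` B1"
    then obtain x where x: "x \<in> B1" "y = T x" by blast
    have xl: "x \<in> l2" "vnorm x \<le> 1" using x by (auto simp: B1_def)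
    obtain g where g: "g \<in> G" "K x \<in> L2M.mball (K g) (\<epsilon>/3)" using F(3) G(3) x(1) by blast
    have gl: "g \<in> l2" "vnorm g \<le> 1" using g G by (auto simp: B1_def)
    have "dl2 (T g) (T x) \<le> dl2 (T g) (K g) + dl2 (K g) (T x)"
      using assms KB xl gl by (intro L2M.triangle) auto
    also have "\<dots> \<le> dl2 (T g) (K g) + (dl2 (K g) (K x) + dl2 (K x) (T x))"
      using assms KB xl gl by (intro add_left_mono L2M.triangle) auto
    also have "dl2 (T g) (K g) \<le> \<epsilon>/3"
      using K(2) gl assms KB by (simp add: dl2_l2 vnorm_commute[of "T g"])
    also have "dl2 (K x) (T x) \<le> \<epsilon>/3" using K(2) xl assms KB by (simp add: dl2_l2)
    also have "dl2 (K g) (K x) < \<epsilon>/3" using g(2) by simp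
    finally have "dl2 (T g) (T x) < \<epsilon>" by simp
    then show "y \<in> (\<Union>x\<in>T ` G. L2M.mball x \<epsilon>)" using g(1) x assms xl gl by auto
  qed
  moreover have "finite (T ` G)" using G by simp
  moreover have "T ` G \<subseteq> T ` B1" using G by auto
  ultimately show "\<exists>K. finite K \<and> K \<subseteq> T ` B1 \<and> T ` B1 \<subseteq> (\<Union>x\<in>K. L2M.mball x \<epsilon>)" by blast
qed

abbreviation dif :: "l2op \<Rightarrow> l2op \<Rightarrow> l2op" where "dif T S \<equiv> op_add T (op_scale (-1) S)"

lemma BL_uminus: "T \<in> BL \<Longrightarrow> x \<in> l2 \<Longrightarrow> T (\<lambda>n. - x n) = (\<lambda>n. - T x n)"
  using BL_scale[of T x "-1"] by simp

lemma compact_neg: "compact_l2op K \<Longrightarrow> compact_l2op (op_scale (-1) K)"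
  by (rule compact_scale)

lemma compact_dif: "compact_l2op K1 \<Longrightarrow> compact_l2op K2 \<Longrightarrow> compact_l2op (dif K1 K2)"
  by (intro compact_add compact_scale)

lemma calkin_mem: "S \<in> calkin T \<longleftrightarrow> S \<in> BL \<and> compact_l2op (dif S T)"
  unfolding calkin_def by simp

lemma self_mem: assumes "T \<in> BL" shows "T \<in> calkin T"
proof -
  have "dif T T = op_zero" by (rule ext) simp
  then show ?thesis using assms by (simp add: calkin_mem)
qed

lemma dif_swap: "dif S T = op_scale (-1) (dif T S)"
  by (rule ext) (simp add: algebra_simps)

lemma dif_trans: "dif U T = op_add (dif U S) (dif S T)"
  by (rule ext) (simp add: algebra_simps)

lemma compact_dif_swap: "compact_l2op (dif T S) \<Longrightarrow> compact_l2op (dif S T)"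
  by (subst dif_swap) (rule compact_scale)

lemma calkin_eq_iff: assumes "S \<in> BL" "T \<in> BL"
  shows "calkin S = calkin T \<longleftrightarrow> compact_l2op (dif S T)"
proof
  assume "calkin S = calkin T"
  then show "compact_l2op (dif S T)" using self_mem[OF assms(1)] by (simp add: calkin_mem)
next
  assume c: "compact_l2op (dif S T)"
  show "calkin S = calkin T"
  proof (rule set_eqI)
    fix U
    have "compact_l2op (dif U S) \<longleftrightarrow> compact_l2op (dif U T)"
    proof
      assume "compact_l2op (dif U S)"
      then show "compact_l2op (dif U T)" using c by (subst dif_trans[of U T S]) (rule compact_add)
    next
      assume "compact_l2op (dif U T)"
      then show "compact_l2op (dif U S)" using compact_dif_swap[OF c]
        by (subst dif_trans[of U S T]) (rule compact_add)
    qed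
    then show "U \<in> calkin S \<longleftrightarrow> U \<in> calkin T" by (simp add: calkin_mem)
  qed
qed

lemma rep_mem: assumes "T \<in> BL" shows "rep (calkin T) \<in> BL" "compact_l2op (dif (rep (calkin T)) T)"
proof -
  have "rep (calkin T) \<in> calkin T" unfolding rep_def by (rule someI[of "\<lambda>S. S \<in> calkin T", OF self_mem[OF assms]])
  then show "rep (calkin T) \<in> BL" "compact_l2op (dif (rep (calkin T)) T)" by (auto simp: calkin_mem)
qed

lemma QC_rep: assumes "a \<in> QC" shows "rep a \<in> BL" "calkin (rep a) = a"
proof -
  obtain T where T: "T \<in> BL" "a = calkin T" using assms unfolding QC_def by blast
  show "rep a \<in> BL" using rep_mem[OF T(1)] T(2) by simp
  show "calkin (rep a) = a" using rep_mem[OF T(1)] T by (simp add: calkin_eq_iff)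
qed

lemma calkin_QC[simp,intro]: "T \<in> BL \<Longrightarrow> calkin T \<in> QC"
  unfolding QC_def by blast

lemma q_add_hom: assumes "T \<in> BL" "S \<in> BL" shows "q_add (calkin T) (calkin S) = calkin (op_add T S)"
proof -
  let ?T = "rep (calkin T)" and ?S = "rep (calkin S)"
  have "dif (op_add ?T ?S) (op_add T S) = op_add (dif ?T T) (dif ?S S)" by (rule ext) (simp add: algebra_simps)
  then have "compact_l2op (dif (op_add ?T ?S) (op_add T S))"
    using rep_mem[OF assms(1)] rep_mem[OF assms(2)] by (simp add: compact_add)
  then show ?thesis unfolding q_add_def using rep_mem assms by (subst calkin_eq_iff) auto
qed

lemma q_scale_hom: assumes "T \<in> BL" shows "q_scale c (calkin T) = calkin (op_scale c T)"
proof -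
  let ?T = "rep (calkin T)"
  have "dif (op_scale c ?T) (op_scale c T) = op_scale c (dif ?T T)" by (rule ext) (simp add: algebra_simps)
  then have "compact_l2op (dif (op_scale c ?T) (op_scale c T))"
    using rep_mem[OF assms(1)] by (simp add: compact_scale)
  then show ?thesis unfolding q_scale_def using rep_mem assms by (subst calkin_eq_iff) auto
qed

lemma q_mul_hom: assumes "T \<in> BL" "S \<in> BL" shows "q_mul (calkin T) (calkin S) = calkin (op_mul T S)"
proof -
  let ?T = "rep (calkin T)" and ?S = "rep (calkin S)"
  have TB: "?T \<in> BL" and SB: "?S \<in> BL" using rep_mem assms by auto
  have "dif (op_mul ?T ?S) (op_mul T S) = op_add (op_mul ?T (dif ?S S)) (op_mul (dif ?T T) S)"
  proof -
    have "op_mul ?T (dif ?S S) = op_add (op_mul ?T ?S) (op_scale (-1) (op_mul ?T S))"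
      using TB SB assms by (simp add: mul_add_right mul_scale_right)
    then show ?thesis by (simp add: fun_eq_iff algebra_simps)
  qed
  moreover have "compact_l2op (op_mul ?T (dif ?S S))" using TB rep_mem[OF assms(2)] by (intro compact_mul_left)
  moreover have "compact_l2op (op_mul (dif ?T T) S)" using assms rep_mem[OF assms(1)] by (intro compact_mul_right)
  ultimately have "compact_l2op (dif (op_mul ?T ?S) (op_mul T S))" by (simp add: compact_add)
  then show ?thesis unfolding q_mul_def using TB SB assms by (subst calkin_eq_iff) auto
qed

lemma q_adj_hom: assumes "T \<in> BL" shows "q_adj (calkin T) = calkin (op_adj T)"
proof -
  let ?T = "rep (calkin T)"
  have TB: "?T \<in> BL" using rep_mem assms by auto
  have "dif (op_adj ?T) (op_adj T) = op_adj (dif ?T T)"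
    using TB assms by (simp add: adj_add adj_scale)
  then have "compact_l2op (dif (op_adj ?T) (op_adj T))"
    using rep_mem[OF assms(1)] by (simp add: compact_adj)
  then show ?thesis unfolding q_adj_def using TB assms by (subst calkin_eq_iff) auto
qed

lemma calkin_adj_cong: assumes "S \<in> BL" "T \<in> BL" "calkin S = calkin T" shows "calkin (op_adj S) = calkin (op_adj T)"
  using q_adj_hom assms by metis

subsection \<open>Calkin norm\<close>

lemma calkin_ne: "T \<in> BL \<Longrightarrow> calkin T \<noteq> {}"
  using self_mem by blast

lemma q_norm_le: assumes "S \<in> calkin T" shows "q_norm (calkin T) \<le> op_norm S"
  unfolding q_norm_def
proof (rule cInf_lower)
  show "op_norm S \<in> op_norm ` calkin T" using assms by simp
  show "bdd_below (op_norm ` calkin T)" unfolding bdd_below_def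
    by (rule exI[of _ 0]) (auto simp: calkin_mem)
qed

lemma q_norm_ge: assumes "T \<in> BL" "\<And>S. S \<in> calkin T \<Longrightarrow> c \<le> op_norm S" shows "c \<le> q_norm (calkin T)"
  unfolding q_norm_def using assms calkin_ne[OF assms(1)] by (intro cInf_greatest) auto

lemma q_norm_nonneg: assumes "T \<in> BL" shows "0 \<le> q_norm (calkin T)"
  using assms by (intro q_norm_ge) (auto simp: calkin_mem)

lemma q_norm_small: assumes "T \<in> BL" "q_norm (calkin T) < e" shows "\<exists>S\<in>calkin T. op_norm S < e"
proof -
  have "Inf (op_norm ` calkin T) < e" using assms(2) unfolding q_norm_def .
  then obtain y where "y \<in> op_norm ` calkin T" "y < e"
    using cInf_lessD[of "op_norm ` calkin T" e] calkin_ne[OF assms(1)] by blast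
  then show ?thesis by blast
qed

lemma q_norm_zero_compact: assumes "T \<in> BL" "q_norm (calkin T) \<le> 0" shows "compact_l2op T"
proof (rule compact_closed[OF assms(1)])
  fix e :: real assume e: "e > 0"
  then have "q_norm (calkin T) < e" using assms(2) by linarith
  then obtain S where S: "S \<in> calkin T" "op_norm S < e" using q_norm_small[OF assms(1)] by blast
  have SB: "S \<in> BL" and cS: "compact_l2op (dif S T)" using S by (auto simp: calkin_mem)
  have "compact_l2op (dif T S)" using cS by (rule compact_dif_swap)
  moreover have "vnorm (\<lambda>i. dif T S x i - T x i) \<le> e" if "x \<in> l2" "vnorm x \<le> 1" for x
  proof -
    have "(\<lambda>i. dif T S x i - T x i) = (\<lambda>i. (-1) * S x i)" by (rule ext) simp
    then have "vnorm (\<lambda>i. dif T S x i - T x i) = vnorm (S x)" using vnorm_scale[of "S x" "-1"] SB that by simp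
    also have "\<dots> \<le> op_norm S * vnorm x" using SB that by (intro op_norm_bound)
    also have "\<dots> \<le> op_norm S * 1" using SB that by (intro mult_left_mono) auto
    finally show ?thesis using S(2) by simp
  qed
  ultimately show "\<exists>K. compact_l2op K \<and> (\<forall>x\<in>l2. vnorm x \<le> 1 \<longrightarrow> vnorm (\<lambda>i. K x i - T x i) \<le> e)" by blast
qed

lemma vnorm_dif_le: assumes "u \<in> l2" "w \<in> l2" shows "vnorm (\<lambda>n. u n + (-1) * w n) \<le> vnorm u + vnorm w"
proof -
  have "vnorm (\<lambda>n. u n + (-1) * w n) \<le> vnorm u + vnorm (\<lambda>n. (-1) * w n)"
    by (rule vnorm_triangle) (use assms in auto)
  also have "vnorm (\<lambda>n. (-1) * w n) = cmod (-1) * vnorm w" by (rule vnorm_scale[OF assms(2)])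
  finally show ?thesis by simp
qed

lemma comm_bound: assumes "A \<in> BL" "B \<in> BL" "x \<in> l2"
  shows "vnorm (dif (op_mul A B) (op_mul B A) x) \<le> 2 * op_norm A * op_norm B * vnorm x"
proof -
  have "vnorm (dif (op_mul A B) (op_mul B A) x) = vnorm (\<lambda>n. A (B x) n + (-1) * B (A x) n)" by simp
  also have "\<dots> \<le> vnorm (A (B x)) + vnorm (B (A x))" using assms by (intro vnorm_dif_le) auto
  also have "vnorm (A (B x)) \<le> op_norm A * vnorm (B x)" using assms by (intro op_norm_bound) auto
  also have "\<dots> \<le> op_norm A * (op_norm B * vnorm x)" using assms by (intro mult_left_mono op_norm_bound) auto
  also have "vnorm (B (A x)) \<le> op_norm B * vnorm (A x)" using assms by (intro op_norm_bound) auto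
  also have "\<dots> \<le> op_norm B * (op_norm A * vnorm x)" using assms by (intro mult_left_mono op_norm_bound) auto
  finally show ?thesis by (simp add: algebra_simps)
qed

lemma limB: assumes aB: "a \<in> BL" and mB: "m \<in> BL" and XB: "\<And>k. X k \<in> BL"
  and comm: "\<And>k. op_mul (X k) m = op_mul m (X k)"
  and lim: "(\<lambda>k. op_norm (dif (X k) a)) \<longlonglongrightarrow> 0"
  shows "op_mul a m = op_mul m a"
proof (rule op_eqI)
  fix x assume x: "x \<in> l2"
  define E where "E = dif (op_mul a m) (op_mul m a)"
  have bound: "vnorm (E x) \<le> (2 * op_norm m * vnorm x) * op_norm (dif (X k) a)" for k
  proof -
    define D where "D = dif (X k) a"
    have DB: "D \<in> BL" unfolding D_def using aB XB by auto
    have Dy: "D y = (\<lambda>n. X k y n - a y n)" for y unfolding D_def by (simp add: fun_eq_iff)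
    have c: "m (X k x) = X k (m x)" using fun_cong[OF comm[of k], of x] by simp
    have Ex: "E x = dif (op_mul m D) (op_mul D m) x"
    proof -
      have "m (D x) = (\<lambda>n. m (X k x) n - m (a x) n)" unfolding Dy using mB aB XB x by (intro BL_diff) auto
      then show ?thesis unfolding E_def using c by (simp add: Dy fun_eq_iff algebra_simps)
    qed
    have "vnorm (E x) \<le> 2 * op_norm m * op_norm D * vnorm x"
      unfolding Ex by (rule comm_bound[OF mB DB x])
    then show ?thesis unfolding D_def by (simp add: algebra_simps)
  qed
  have "(\<lambda>k. (2 * op_norm m * vnorm x) * op_norm (dif (X k) a)) \<longlonglongrightarrow> (2 * op_norm m * vnorm x) * 0"
    by (intro tendsto_mult tendsto_const lim)
  then have "vnorm (E x) \<le> (2 * op_norm m * vnorm x) * 0"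
    by (rule LIMSEQ_le_const) (use bound in blast)
  moreover have "E \<in> BL" unfolding E_def using aB mB by auto
  ultimately have "E x = (\<lambda>n. 0)" using x by (intro vnorm_le0) auto
  then show "op_mul a m x = op_mul m a x" unfolding E_def by (simp add: fun_eq_iff)
next
  fix x assume "x \<notin> l2" then show "op_mul a m x = op_mul m a x" using aB mB by (simp add: BL_out)
qed

lemma shift_identity:
  assumes B: "S \<in> BL" "Tq \<in> BL" "Tk \<in> BL" "Ta \<in> BL"
  defines "K' \<equiv> dif S (dif Tk Ta)"
  shows "dif (dif (op_mul S Tq) (op_mul Tq S)) (dif (op_mul Tq Ta) (op_mul Ta Tq))
       = op_add (dif (op_mul K' Tq) (op_mul Tq K')) (dif (op_mul Tk Tq) (op_mul Tq Tk))"
proof (rule op_eqI)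
  fix x assume x: "x \<in> l2"
  have Sy: "S y = (\<lambda>n. K' y n + (Tk y n - Ta y n))" for y unfolding K'_def by (simp add: fun_eq_iff)
  have K'B: "K' \<in> BL" unfolding K'_def using B by auto
  have TqS: "Tq (S x) = (\<lambda>n. Tq (K' x) n + (Tq (Tk x) n - Tq (Ta x) n))"
  proof -
    have "Tq (S x) = (\<lambda>n. Tq (K' x) n + Tq (\<lambda>n. Tk x n - Ta x n) n)"
      unfolding Sy[of x] by (rule BL_add) (use B K'B x in auto)
    also have "Tq (\<lambda>n. Tk x n - Ta x n) = (\<lambda>n. Tq (Tk x) n - Tq (Ta x) n)"
      by (rule BL_diff) (use B x in auto)
    finally show ?thesis .
  qed
  show "dif (dif (op_mul S Tq) (op_mul Tq S)) (dif (op_mul Tq Ta) (op_mul Ta Tq)) x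
       = op_add (dif (op_mul K' Tq) (op_mul Tq K')) (dif (op_mul Tk Tq) (op_mul Tq Tk)) x"
    by (simp add: TqS Sy[of "Tq x"] fun_eq_iff algebra_simps)
next
  fix x assume x: "x \<notin> l2"
  have K'B: "K' \<in> BL" unfolding K'_def using B by auto
  show "dif (dif (op_mul S Tq) (op_mul Tq S)) (dif (op_mul Tq Ta) (op_mul Ta Tq)) x
       = op_add (dif (op_mul K' Tq) (op_mul Tq K')) (dif (op_mul Tk Tq) (op_mul Tq Tk)) x"
    using B K'B x by (simp add: BL_out)
qed

lemma limQ: assumes aB: "Ta \<in> BL" and qB: "Tq \<in> BL" and XB: "\<And>k. Tk k \<in> BL"
  and comm: "\<And>k. compact_l2op (dif (op_mul (Tk k) Tq) (op_mul Tq (Tk k)))"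
  and lim: "(\<lambda>k. q_norm (calkin (dif (Tk k) Ta))) \<longlonglongrightarrow> 0"
  shows "compact_l2op (dif (op_mul Ta Tq) (op_mul Tq Ta))"
proof -
  define E where "E = dif (op_mul Tq Ta) (op_mul Ta Tq)"
  have EB: "E \<in> BL" unfolding E_def using aB qB by auto
  define C where "C = 2 * op_norm Tq"
  have C0: "C \<ge> 0" unfolding C_def using qB by simp
  have bound: "q_norm (calkin E) \<le> C * q_norm (calkin (dif (Tk k) Ta))" for k
  proof -
    define D where "D = dif (Tk k) Ta"
    have DB: "D \<in> BL" unfolding D_def using aB XB by auto
    have main: "q_norm (calkin E) \<le> C * op_norm S" if S: "S \<in> calkin D" for S
    proof -
      have SB: "S \<in> BL" and cK: "compact_l2op (dif S D)" using S by (auto simp: calkin_mem)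
      define F where "F = dif (op_mul S Tq) (op_mul Tq S)"
      have FB: "F \<in> BL" unfolding F_def using SB qB by auto
      have "dif F E = op_add (dif (op_mul (dif S D) Tq) (op_mul Tq (dif S D))) (dif (op_mul (Tk k) Tq) (op_mul Tq (Tk k)))"
        unfolding F_def E_def D_def by (rule shift_identity[OF SB qB XB aB])
      moreover have "compact_l2op (dif (op_mul (dif S D) Tq) (op_mul Tq (dif S D)))"
        by (rule compact_dif[OF compact_mul_right[OF cK qB] compact_mul_left[OF qB cK]])
      ultimately have "compact_l2op (dif F E)" using comm[of k] by (simp add: compact_add)
      then have "F \<in> calkin E" using FB by (simp add: calkin_mem)
      then have "q_norm (calkin E) \<le> op_norm F" by (rule q_norm_le)
      also have "op_norm F \<le> C * op_norm S"
      proof (rule op_norm_le2)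
        show "0 \<le> C * op_norm S" using C0 SB by simp
        fix x assume "x \<in> l2"
        then have "vnorm (F x) \<le> 2 * op_norm S * op_norm Tq * vnorm x"
          unfolding F_def by (rule comm_bound[OF SB qB])
        then show "vnorm (F x) \<le> C * op_norm S * vnorm x" unfolding C_def by (simp add: algebra_simps)
      qed
      finally show ?thesis .
    qed
    show ?thesis
    proof (cases "C = 0")
      case True
      then show ?thesis using main[OF self_mem[OF DB]] unfolding D_def by simp
    next
      case False
      then have Cp: "C > 0" using C0 by simp
      have "q_norm (calkin E) / C \<le> q_norm (calkin D)"
        using DB by (rule q_norm_ge) (use main Cp in \<open>simp add: divide_le_eq algebra_simps\<close>)
      then show ?thesis unfolding D_def using Cp by (simp add: divide_le_eq algebra_simps)
    qed
  qed
  have "(\<lambda>k. C * q_norm (calkin (dif (Tk k) Ta))) \<longlonglongrightarrow> C * 0"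
    by (intro tendsto_mult tendsto_const lim)
  then have "q_norm (calkin E) \<le> C * 0"
    by (rule LIMSEQ_le_const) (use bound in blast)
  then have "compact_l2op E" using EB by (intro q_norm_zero_compact) auto
  then show ?thesis unfolding E_def by (rule compact_dif_swap)
qed

definition qc :: "l2op \<Rightarrow> l2op \<Rightarrow> bool" where
  "qc S T \<longleftrightarrow> compact_l2op (dif (op_mul S T) (op_mul T S))"

lemma qcomm_iff: assumes "S \<in> BL" "T \<in> BL"
  shows "q_mul (calkin S) (calkin T) = q_mul (calkin T) (calkin S) \<longleftrightarrow> qc S T"
  using assms by (simp add: q_mul_hom calkin_eq_iff qc_def)

lemma qc_sym: "qc S T \<Longrightarrow> qc T S"
  unfolding qc_def by (rule compact_dif_swap)

lemma qc_exact: "op_mul S T = op_mul T S \<Longrightarrow> qc S T"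
proof -
  assume e: "op_mul S T = op_mul T S"
  have "dif (op_mul S T) (op_mul T S) = op_zero" unfolding e by (rule ext) simp
  then show ?thesis unfolding qc_def by simp
qed

lemma qc_add: assumes "S1 \<in> BL" "S2 \<in> BL" "T \<in> BL" "qc S1 T" "qc S2 T" shows "qc (op_add S1 S2) T"
proof -
  have "dif (op_mul (op_add S1 S2) T) (op_mul T (op_add S1 S2))
      = op_add (dif (op_mul S1 T) (op_mul T S1)) (dif (op_mul S2 T) (op_mul T S2))"
    using assms by (simp add: mul_add_left mul_add_right fun_eq_iff algebra_simps)
  then show ?thesis using assms unfolding qc_def by (simp add: compact_add)
qed

lemma qc_scale: assumes "S \<in> BL" "T \<in> BL" "qc S T" shows "qc (op_scale c S) T"
proof -
  have "dif (op_mul (op_scale c S) T) (op_mul T (op_scale c S)) = op_scale c (dif (op_mul S T) (op_mul T S))"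
    using assms by (simp add: mul_scale_left mul_scale_right fun_eq_iff algebra_simps)
  then show ?thesis using assms unfolding qc_def by (simp add: compact_scale)
qed

lemma qc_mul: assumes "S1 \<in> BL" "S2 \<in> BL" "T \<in> BL" "qc S1 T" "qc S2 T" shows "qc (op_mul S1 S2) T"
proof -
  have "dif (op_mul (op_mul S1 S2) T) (op_mul T (op_mul S1 S2))
      = op_add (op_mul S1 (dif (op_mul S2 T) (op_mul T S2))) (op_mul (dif (op_mul S1 T) (op_mul T S1)) S2)"
    using assms by (simp add: mul_add_left mul_add_right mul_scale_left mul_scale_right fun_eq_iff algebra_simps)
  moreover have "compact_l2op (op_mul S1 (dif (op_mul S2 T) (op_mul T S2)))"
    using assms unfolding qc_def by (intro compact_mul_left) auto
  moreover have "compact_l2op (op_mul (dif (op_mul S1 T) (op_mul T S1)) S2)"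
    using assms unfolding qc_def by (intro compact_mul_right) auto
  ultimately show ?thesis unfolding qc_def by (simp add: compact_add)
qed

lemma qc_adj: assumes "S \<in> BL" "T \<in> BL" "qc S T" shows "qc (op_adj S) (op_adj T)"
proof -
  have "op_adj (dif (op_mul S T) (op_mul T S)) = dif (op_mul (op_adj T) (op_adj S)) (op_mul (op_adj S) (op_adj T))"
    using assms by (simp add: adj_add adj_scale adj_mul)
  moreover have "compact_l2op (op_adj (dif (op_mul S T) (op_mul T S)))"
    using assms(3) unfolding qc_def by (rule compact_adj)
  ultimately have "qc (op_adj T) (op_adj S)" unfolding qc_def by simp
  then show ?thesis by (rule qc_sym)
qed

lemma qc_zero: "T \<in> BL \<Longrightarrow> qc op_zero T"
  by (rule qc_exact) simp

definition comm_set :: "l2op set \<Rightarrow> bool" where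
  "comm_set M \<longleftrightarrow> (\<forall>a\<in>M. \<forall>b\<in>M. op_mul a b = op_mul b a)"

definition Fam :: "l2op set \<Rightarrow> l2op set set" where
  "Fam B = {M. B \<subseteq> M \<and> M \<subseteq> BL \<and> comm_set M \<and> (\<forall>a\<in>M. op_adj a \<in> M)}"

lemma subalg_facts: assumes "comm_subalg_B B"
  shows "B \<subseteq> BL" "comm_set B" "\<And>a. a \<in> B \<Longrightarrow> op_adj a \<in> B"
  using assms unfolding comm_cstar_subalg_def cstar_subalg_def comm_set_def by auto

lemma zorn_M: assumes "comm_subalg_B B" shows "\<exists>M\<in>Fam B. \<forall>X\<in>Fam B. M \<subseteq> X \<longrightarrow> X = M"
proof (rule subset_Zorn_nonempty)
  show "Fam B \<noteq> {}" using subalg_facts[OF assms] unfolding Fam_def by blast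
next
  fix C assume C: "C \<noteq> {}" "subset.chain (Fam B) C"
  then have CF: "C \<subseteq> Fam B" and ch: "\<forall>X\<in>C. \<forall>Y\<in>C. X \<subseteq> Y \<or> Y \<subseteq> X"
    by (auto simp: subset_chain_def)
  show "\<Union>C \<in> Fam B" unfolding Fam_def
  proof (intro CollectI conjI)
    show "B \<subseteq> \<Union>C" using C(1) CF unfolding Fam_def by blast
    show "\<Union>C \<subseteq> BL" using CF unfolding Fam_def by blast
    show "\<forall>a\<in>\<Union>C. op_adj a \<in> \<Union>C" using CF unfolding Fam_def by blast
    show "comm_set (\<Union>C)" unfolding comm_set_def
    proof (intro ballI)
      fix a b assume "a \<in> \<Union>C" "b \<in> \<Union>C"
      then obtain X Y where XY: "X \<in> C" "Y \<in> C" "a \<in> X" "b \<in> Y" by blast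
      show "op_mul a b = op_mul b a"
      proof (cases "X \<subseteq> Y")
        case True
        then show ?thesis using XY CF unfolding Fam_def comm_set_def by blast
      next
        case False
        then have "Y \<subseteq> X" using ch XY by blast
        then show ?thesis using XY CF unfolding Fam_def comm_set_def by blast
      qed
    qed
  qed
qed

locale maxM =
  fixes B M
  assumes MF: "M \<in> Fam B" and maxi: "\<And>X. X \<in> Fam B \<Longrightarrow> M \<subseteq> X \<Longrightarrow> X = M"
begin

lemma MB: "M \<subseteq> BL" using MF unfolding Fam_def by blast
lemma Mcomm: "a \<in> M \<Longrightarrow> b \<in> M \<Longrightarrow> op_mul a b = op_mul b a" using MF unfolding Fam_def comm_set_def by blast
lemma Madj: "a \<in> M \<Longrightarrow> op_adj a \<in> M" using MF unfolding Fam_def by blast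
lemma BM: "B \<subseteq> M" using MF unfolding Fam_def by blast
lemma MBL: "a \<in> M \<Longrightarrow> a \<in> BL" using MB by blast

lemma Mcomm_pt: "a \<in> M \<Longrightarrow> b \<in> M \<Longrightarrow> a (b y) = b (a y)"
  using fun_cong[OF Mcomm, of a b y] by simp

lemma addM: assumes tB: "t \<in> BL" and c1: "\<And>m. m \<in> M \<Longrightarrow> op_mul t m = op_mul m t"
  and c2: "\<And>m. m \<in> M \<Longrightarrow> op_mul (op_adj t) m = op_mul m (op_adj t)"
  and c3: "op_mul t (op_adj t) = op_mul (op_adj t) t"
  shows "t \<in> M"
proof -
  define M' where "M' = insert t (insert (op_adj t) M)"
  have "M' \<in> Fam B" unfolding Fam_def
  proof (intro CollectI conjI)
    show "B \<subseteq> M'" using BM unfolding M'_def by blast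
    show "M' \<subseteq> BL" using MB tB unfolding M'_def by auto
    show "\<forall>a\<in>M'. op_adj a \<in> M'" using Madj tB unfolding M'_def by auto
    show "comm_set M'" unfolding comm_set_def M'_def
      using c1 c2 c3 Mcomm by (auto simp: c1 c2 c3)
  qed
  moreover have "M \<subseteq> M'" unfolding M'_def by blast
  ultimately have "M' = M" by (rule maxi)
  then show ?thesis unfolding M'_def by blast
qed

lemma zero_M: "op_zero \<in> M"
  by (rule addM) (auto simp: MBL)

lemma add_M: assumes a: "a \<in> M" and b: "b \<in> M" shows "op_add a b \<in> M"
proof (rule addM)
  have B: "a \<in> BL" "b \<in> BL" "op_adj a \<in> BL" "op_adj b \<in> BL" using a b Madj MBL by auto
  show "op_add a b \<in> BL" using B by auto
  fix m assume m: "m \<in> M"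
  have mB: "m \<in> BL" using m MBL by auto
  have h1: "op_mul a m = op_mul m a" "op_mul b m = op_mul m b" using a b m Mcomm by auto
  show "op_mul (op_add a b) m = op_mul m (op_add a b)"
    using B mB by (simp add: mul_add_left mul_add_right h1)
  have h2: "op_mul (op_adj a) m = op_mul m (op_adj a)" "op_mul (op_adj b) m = op_mul m (op_adj b)"
    using a b m Mcomm Madj by auto
  show "op_mul (op_adj (op_add a b)) m = op_mul m (op_adj (op_add a b))"
    using B mB by (simp add: adj_add mul_add_left mul_add_right h2)
next
  have B: "a \<in> BL" "b \<in> BL" "op_adj a \<in> BL" "op_adj b \<in> BL" using a b Madj MBL by auto
  have h: "op_mul (op_adj a) a = op_mul a (op_adj a)" "op_mul (op_adj a) b = op_mul b (op_adj a)"
    "op_mul (op_adj b) a = op_mul a (op_adj b)" "op_mul (op_adj b) b = op_mul b (op_adj b)"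
    using a b Mcomm Madj by auto
  show "op_mul (op_add a b) (op_adj (op_add a b)) = op_mul (op_adj (op_add a b)) (op_add a b)"
    using B by (simp add: adj_add mul_add_left mul_add_right h fun_eq_iff algebra_simps)
qed

lemma mul_M: assumes a: "a \<in> M" and b: "b \<in> M" shows "op_mul a b \<in> M"
proof (rule addM)
  have B: "a \<in> BL" "b \<in> BL" "op_adj a \<in> BL" "op_adj b \<in> BL" using a b Madj MBL by auto
  show "op_mul a b \<in> BL" using B by auto
  fix m assume m: "m \<in> M"
  have h1: "a (m y) = m (a y)" "b (m y) = m (b y)" for y using a b m Mcomm_pt by auto
  show "op_mul (op_mul a b) m = op_mul m (op_mul a b)"
    by (simp add: fun_eq_iff h1)
  have h2: "op_adj a (m y) = m (op_adj a y)" "op_adj b (m y) = m (op_adj b y)" for y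
    using a b m Mcomm_pt Madj by auto
  show "op_mul (op_adj (op_mul a b)) m = op_mul m (op_adj (op_mul a b))"
    using B by (simp add: adj_mul fun_eq_iff h2)
next
  have B: "a \<in> BL" "b \<in> BL" "op_adj a \<in> BL" "op_adj b \<in> BL" using a b Madj MBL by auto
  have h: "b (op_adj b y) = op_adj b (b y)" "a (op_adj b y) = op_adj b (a y)"
    "b (op_adj a y) = op_adj a (b y)" "a (op_adj a y) = op_adj a (a y)" for y
    using a b Mcomm_pt Madj by auto
  show "op_mul (op_mul a b) (op_adj (op_mul a b)) = op_mul (op_adj (op_mul a b)) (op_mul a b)"
    using B by (simp add: adj_mul fun_eq_iff h)
qed

lemma scale_M: assumes a: "a \<in> M" shows "op_scale c a \<in> M"
proof (rule addM)
  have B: "a \<in> BL" "op_adj a \<in> BL" using a Madj MBL by auto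
  show "op_scale c a \<in> BL" using B by auto
  fix m assume m: "m \<in> M"
  have mB: "m \<in> BL" using m MBL by auto
  have h1: "op_mul a m = op_mul m a" "op_mul (op_adj a) m = op_mul m (op_adj a)" using a m Mcomm Madj by auto
  show "op_mul (op_scale c a) m = op_mul m (op_scale c a)"
    using B mB by (simp add: mul_scale_left mul_scale_right h1)
  show "op_mul (op_adj (op_scale c a)) m = op_mul m (op_adj (op_scale c a))"
    using B mB by (simp add: adj_scale mul_scale_left mul_scale_right h1)
next
  have B: "a \<in> BL" "op_adj a \<in> BL" using a Madj MBL by auto
  have h: "op_mul (op_adj a) a = op_mul a (op_adj a)" using a Mcomm Madj by auto
  show "op_mul (op_scale c a) (op_adj (op_scale c a)) = op_mul (op_adj (op_scale c a)) (op_scale c a)"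
    using B by (simp add: adj_scale mul_scale_left mul_scale_right h fun_eq_iff algebra_simps)
qed

lemma lim_M: assumes X: "\<And>k. X k \<in> M" and aB: "a \<in> BL"
  and lim: "(\<lambda>k. op_norm (op_add (X k) (op_scale (-1) a))) \<longlonglongrightarrow> 0"
  shows "a \<in> M"
proof -
  have XB: "\<And>k. X k \<in> BL" using X MBL by auto
  have h1: "op_mul a m = op_mul m a" if m: "m \<in> M" for m
    using aB MBL[OF m] XB Mcomm[OF X m] lim by (rule limB)
  have h2: "op_mul (op_adj a) m = op_mul m (op_adj a)" if m: "m \<in> M" for m
  proof -
    have mB: "m \<in> BL" using m MBL by auto
    have "op_mul a (op_adj m) = op_mul (op_adj m) a" using h1[OF Madj[OF m]] .
    then have "op_adj (op_mul a (op_adj m)) = op_adj (op_mul (op_adj m) a)" by simp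
    then show ?thesis using aB mB by (simp add: adj_mul)
  qed
  have h3: "op_mul a (op_adj a) = op_mul (op_adj a) a"
    using aB adj_BL[OF aB] XB _ lim by (rule limB) (use h2[OF X] in simp)
  show ?thesis using aB h1 h2 h3 by (rule addM)
qed

lemma M_subalg: "comm_subalg_B M"
  unfolding comm_cstar_subalg_def cstar_subalg_def
proof (intro conjI ballI allI impI)
  show "M \<subseteq> BL" by (rule MB)
  show "op_zero \<in> M" by (rule zero_M)
  fix a b assume "a \<in> M" "b \<in> M"
  then show "op_add a b \<in> M" "op_mul a b \<in> M" "op_mul a b = op_mul b a" by (auto intro: add_M mul_M Mcomm)
next
  fix c a assume "a \<in> M" then show "op_scale c a \<in> M" by (rule scale_M)
next
  fix a assume "a \<in> M" then show "op_adj a \<in> M" by (rule Madj)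
next
  fix X a assume "(\<forall>k. X k \<in> M) \<and> a \<in> BL \<and> (\<lambda>k. op_norm (op_add (X k) (op_scale (-1) a))) \<longlonglongrightarrow> 0"
  then show "a \<in> M" using lim_M by blast
qed

lemma M_masa: "masa_B M"
  unfolding masa_def
proof (intro conjI allI impI)
  show "comm_subalg_B M" by (rule M_subalg)
  fix C assume C: "comm_subalg_B C \<and> M \<subseteq> C"
  have "C \<in> Fam B" unfolding Fam_def using C subalg_facts[of C] BM by auto
  then show "C = M" using C maxi by blast
qed

end

theorem lemma2p15:
  assumes "masa_Q A"
    and "has_commutative_lift A"
  shows "\<exists>B'. masa_B B' \<and> calkin ` B' = A"
proof -
  obtain B where B: "comm_subalg_B B" "calkin ` B = A"
    using assms(2) unfolding has_commutative_lift_def by blast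
  obtain M where M: "M \<in> Fam B" "\<forall>X\<in>Fam B. M \<subseteq> X \<longrightarrow> X = M" using zorn_M[OF B(1)] by blast
  interpret maxM B M by unfold_locales (use M in auto)
  define P where "P = calkin ` M"
  define comP where "comP = {c \<in> QC. \<forall>p\<in>P. q_mul c p = q_mul p c}"
  define C where "C = {c \<in> QC. \<forall>q\<in>comP. q_mul c q = q_mul q c}"
  have comP_QC: "comP \<subseteq> QC" unfolding comP_def by blast
  have memP: "calkin S \<in> comP \<longleftrightarrow> (\<forall>m\<in>M. qc S m)" if SB: "S \<in> BL" for S
  proof -
    have "(\<forall>p\<in>P. q_mul (calkin S) p = q_mul p (calkin S)) \<longleftrightarrow> (\<forall>m\<in>M. qc S m)"
      unfolding P_def using SB MBL by (auto simp: qcomm_iff)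
    then show ?thesis unfolding comP_def using SB by auto
  qed
  have memC: "calkin T \<in> C \<longleftrightarrow> (\<forall>S\<in>BL. calkin S \<in> comP \<longrightarrow> qc T S)" if TB: "T \<in> BL" for T
  proof
    assume "calkin T \<in> C"
    then show "\<forall>S\<in>BL. calkin S \<in> comP \<longrightarrow> qc T S" unfolding C_def using TB by (auto simp: qcomm_iff)
  next
    assume h: "\<forall>S\<in>BL. calkin S \<in> comP \<longrightarrow> qc T S"
    have "q_mul (calkin T) q = q_mul q (calkin T)" if q: "q \<in> comP" for q
    proof -
      have qQ: "q \<in> QC" using q comP_QC by blast
      have "qc T (rep q)" using h q QC_rep[OF qQ] by auto
      then have "q_mul (calkin T) (calkin (rep q)) = q_mul (calkin (rep q)) (calkin T)"
        using qcomm_iff[OF TB QC_rep(1)[OF qQ]] by blast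
      then show ?thesis using QC_rep[OF qQ] by simp
    qed
    then show "calkin T \<in> C" unfolding C_def using TB by auto
  qed
  have comP_adj: "calkin (op_adj S) \<in> comP" if SB: "S \<in> BL" and S: "calkin S \<in> comP" for S
  proof -
    have "qc (op_adj S) m" if m: "m \<in> M" for m
    proof -
      have "qc S (op_adj m)" using S SB memP Madj[OF m] by auto
      then have "qc (op_adj S) (op_adj (op_adj m))" using SB MBL[OF m] by (intro qc_adj) auto
      then show ?thesis using MBL[OF m] by simp
    qed
    then show ?thesis using SB by (simp add: memP)
  qed
  have C_QC: "C \<subseteq> QC" unfolding C_def by blast
  have C_form: "\<exists>T. T \<in> BL \<and> c = calkin T" if "c \<in> C" for c
    using QC_rep that C_QC by (metis subsetD)
  have P_comP: "P \<subseteq> comP"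
  proof
    fix p assume "p \<in> P"
    then obtain m where m: "m \<in> M" "p = calkin m" unfolding P_def by blast
    have "qc m m'" if "m' \<in> M" for m' using Mcomm[OF m(1) that] by (rule qc_exact)
    then show "p \<in> comP" using m MBL by (simp add: memP)
  qed
  have P_C: "P \<subseteq> C"
  proof
    fix p assume "p \<in> P"
    then obtain m where m: "m \<in> M" "p = calkin m" unfolding P_def by blast
    have "qc m S" if "S \<in> BL" "calkin S \<in> comP" for S
      using that m memP by (auto intro: qc_sym)
    then show "p \<in> C" using m MBL by (simp add: memC)
  qed
  have C_alg: "comm_cstar_subalg QC q_zero q_add q_scale q_mul q_adj q_norm C"
    unfolding comm_cstar_subalg_def cstar_subalg_def
  proof (intro conjI ballI allI impI)
    show "C \<subseteq> QC" by (rule C_QC)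
    show "q_zero \<in> C" unfolding q_zero_def by (subst memC) (auto intro: qc_zero)
  next
    fix a b assume a: "a \<in> C" and b: "b \<in> C"
    obtain Ta where Ta: "Ta \<in> BL" "a = calkin Ta" using C_form[OF a] by blast
    obtain Tb where Tb: "Tb \<in> BL" "b = calkin Tb" using C_form[OF b] by blast
    have ha: "qc Ta S" if "S \<in> BL" "calkin S \<in> comP" for S using a Ta memC that by auto
    have hb: "qc Tb S" if "S \<in> BL" "calkin S \<in> comP" for S using b Tb memC that by auto
    show "q_add a b \<in> C" unfolding Ta(2) Tb(2) using Ta Tb ha hb
      by (simp add: q_add_hom memC qc_add)
    show "q_mul a b \<in> C" unfolding Ta(2) Tb(2) using Ta Tb ha hb
      by (simp add: q_mul_hom memC qc_mul)
    have "b \<in> comP" unfolding comP_def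
    proof (intro CollectI conjI ballI)
      show "b \<in> QC" using b C_QC by blast
      fix p assume "p \<in> P"
      then have "p \<in> comP" using P_comP by blast
      then show "q_mul b p = q_mul p b" using b unfolding C_def by blast
    qed
    then show "q_mul a b = q_mul b a" using a unfolding C_def by blast
  next
    fix c a assume a: "a \<in> C"
    obtain Ta where Ta: "Ta \<in> BL" "a = calkin Ta" using C_form[OF a] by blast
    have ha: "qc Ta S" if "S \<in> BL" "calkin S \<in> comP" for S using a Ta memC that by auto
    show "q_scale c a \<in> C" unfolding Ta(2) using Ta ha by (simp add: q_scale_hom memC qc_scale)
  next
    fix a assume a: "a \<in> C"
    obtain Ta where Ta: "Ta \<in> BL" "a = calkin Ta" using C_form[OF a] by blast
    have ha: "qc Ta S" if "S \<in> BL" "calkin S \<in> comP" for S using a Ta memC that by auto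
    have "qc (op_adj Ta) S" if S: "S \<in> BL" "calkin S \<in> comP" for S
    proof -
      have "qc Ta (op_adj S)" using ha comP_adj S by auto
      then have "qc (op_adj Ta) (op_adj (op_adj S))" using Ta S by (intro qc_adj) auto
      then show ?thesis using S by simp
    qed
    then show "q_adj a \<in> C" unfolding Ta(2) using Ta by (simp add: q_adj_hom memC)
  next
    fix X a assume h: "(\<forall>k. X k \<in> C) \<and> a \<in> QC \<and> (\<lambda>k. q_norm (q_add (X k) (q_scale (-1) a))) \<longlonglongrightarrow> 0"
    have aQ: "a \<in> QC" using h by blast
    define Ta where "Ta = rep a"
    have Ta: "Ta \<in> BL" "a = calkin Ta" unfolding Ta_def using QC_rep[OF aQ] by auto
    define Tk where "Tk = (\<lambda>k. rep (X k))"
    have XQ: "X k \<in> QC" for k using h C_QC by blast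
    have Tk: "Tk k \<in> BL" "X k = calkin (Tk k)" for k unfolding Tk_def using QC_rep[OF XQ] by auto
    have eq: "q_add (X k) (q_scale (-1) a) = calkin (dif (Tk k) Ta)" for k
      unfolding Ta(2) Tk(2)[of k] using Ta Tk by (simp add: q_scale_hom q_add_hom)
    have lim: "(\<lambda>k. q_norm (calkin (dif (Tk k) Ta))) \<longlonglongrightarrow> 0" using h unfolding eq by blast
    have "qc Ta S" if S: "S \<in> BL" "calkin S \<in> comP" for S
    proof -
      have hk: "qc (Tk k) S" for k
      proof -
        have "X k \<in> C" using h by blast
        then have "calkin (Tk k) \<in> C" using Tk(2)[of k] by simp
        then show ?thesis using memC[OF Tk(1)[of k]] S by blast
      qed
      show ?thesis unfolding qc_def
        by (rule limQ[OF Ta(1) S(1) Tk(1) _ lim]) (use hk in \<open>simp add: qc_def\<close>)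
    qed
    then show "a \<in> C" unfolding Ta(2) using Ta by (simp add: memC)
  qed
  have "A \<subseteq> C" using B(2) BM P_C unfolding P_def by blast
  then have "C = A" using assms(1) C_alg unfolding masa_def by blast
  then have "P \<subseteq> A" using P_C by blast
  moreover have "A \<subseteq> P" using B(2) BM unfolding P_def by blast
  ultimately have "calkin ` M = A" unfolding P_def by blast
  then show ?thesis using M_masa by blast
qed

end
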